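(* The following are equivalent: (i) there exists a decomposition of $V$ which is split with respect to the orderings $E_0,\ldots,E_d$ and $E^*_0,\ldots,E^*_d$; (ii) for all $0\le i,j\le d$: $E^*_iAE^*_j=0$ if $i-j>1$ and $E^*_iAE^*_j\ne0$ if $i-j=1$; and $E_iA^*E_j=0$ if $j-i>1$ and $E_iA^*E_j\ne0$ if $j-i=1$.
   Context: Let $\mathbb K$ be a field, $d\ge 0$ an integer, and $\mathcal A$ a $\mathbb K$-algebra isomorphic to $\mathrm{Mat}_{d+1}(\mathbb K)$, with identity $I$. An element of $\mathcal A$ is multiplicity-free if it has $d+1$ mutually distinct eigenvalues, all in $\mathbb K$; for such $A$ with eigenvalues $\theta_0,\ldots,\theta_d$, the primitive idempotent associated with $\theta_i$ is $E_i=\prod_{j\ne i}(A-\theta_jI)/(\theta_i-\theta_j)$. Standing setup: $A,A^*$ are multiplicity-free elements of $\mathcal A$ ($A^*$ is just a name, not an adjoint); $E_0,\ldots,E_d$ is an ordering of the primitive idempotents of $A$ and $\theta_i$ is the eigenvalue of $A$ for $E_i$; $E^*_0,\ldots,E^*_d$ is an ordering of the primitive idempotents of $A^*$ and $\theta^*_i$ is the eigenvalue of $A^*$ for $E^*_i$; $V$ is an irreducible left $\mathcal A$-module. A decomposition of $V$ is a sequence $U_0,\ldots,U_d$ of 1-dimensional subspaces with $V=U_0+\cdots+U_d$ (direct sum). Such a decomposition is split (with respect to the orderings $E_0,\ldots,E_d$ and $E^*_0,\ldots,E^*_d$) if $(A-\theta_iI)U_i=U_{i+1}$ for $0\le i\le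 d-1$, $(A-\theta_dI)U_d=0$, $(A^*-\theta^*_iI)U_i=U_{i-1}$ for $1\le i\le d$, and $(A^*-\theta^*_0I)U_0=0$. *)

theory Defs
  imports "Jordan_Normal_Form.Char_Poly"
begin

text \<open>We realise the algebra isomorphic to Mat_{d+1}(K) as the algebra of (d+1)x(d+1)
matrices over K, and its (unique up to isomorphism) irreducible module V as the column
vectors K^{d+1} = carrier_vec (d+1).\<close>

definition eigenvalue_ordering :: "nat \<Rightarrow> 'a::field mat \<Rightarrow> (nat \<Rightarrow> 'a) \<Rightarrow> bool" where
  "eigenvalue_ordering d A th \<longleftrightarrow>
     A \<in> carrier_mat (Suc d) (Suc d) \<and> inj_on th {..d} \<and> (\<forall>i\<le>d. eigenvalue A (th i))"

text \<open>Primitive idempotent E_i = prod_{j ne i} (A - theta_j I)/(theta_i - theta_j).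
(The factors commute, so the order of the product is irrelevant.)\<close>
definition prim_idem :: "nat \<Rightarrow> 'a::field mat \<Rightarrow> (nat \<Rightarrow> 'a) \<Rightarrow> nat \<Rightarrow> 'a mat" where
  "prim_idem d A th i =
     foldr (\<lambda>j M. ((1 / (th i - th j)) \<cdot>\<^sub>m (A - th j \<cdot>\<^sub>m 1\<^sub>m (Suc d))) * M)
       (filter (\<lambda>j. j \<noteq> i) [0..<Suc d]) (1\<^sub>m (Suc d))"

definition one_dim_subspace :: "nat \<Rightarrow> 'a::field vec set \<Rightarrow> bool" where
  "one_dim_subspace n U \<longleftrightarrow> (\<exists>u\<in>carrier_vec n. u \<noteq> 0\<^sub>v n \<and> U = {c \<cdot>\<^sub>v u | c. True})"

definition decomposition :: "nat \<Rightarrow> (nat \<Rightarrow> 'a::field vec set) \<Rightarrow> bool" where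
  "decomposition d U \<longleftrightarrow>
     (\<forall>i\<le>d. one_dim_subspace (Suc d) (U i)) \<and>
     (\<forall>v\<in>carrier_vec (Suc d). \<exists>f. (\<forall>i\<le>d. f i \<in> U i) \<and>
         v = finsum_vec TYPE('a) (Suc d) f {..d}) \<and>
     (\<forall>f. (\<forall>i\<le>d. f i \<in> U i) \<and> finsum_vec TYPE('a) (Suc d) f {..d} = 0\<^sub>v (Suc d)
         \<longrightarrow> (\<forall>i\<le>d. f i = 0\<^sub>v (Suc d)))"

definition split_decomposition ::
  "nat \<Rightarrow> 'a::field mat \<Rightarrow> (nat \<Rightarrow> 'a) \<Rightarrow> 'a mat \<Rightarrow> (nat \<Rightarrow> 'a) \<Rightarrow> (nat \<Rightarrow> 'a vec set) \<Rightarrow> bool" where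
  "split_decomposition d A th As ths U \<longleftrightarrow>
     decomposition d U \<and>
     (\<forall>i<d. (\<lambda>x. (A - th i \<cdot>\<^sub>m 1\<^sub>m (Suc d)) *\<^sub>v x) ` U i = U (Suc i)) \<and>
     (\<lambda>x. (A - th d \<cdot>\<^sub>m 1\<^sub>m (Suc d)) *\<^sub>v x) ` U d = {0\<^sub>v (Suc d)} \<and>
     (\<forall>i. 1 \<le> i \<and> i \<le> d \<longrightarrow> (\<lambda>x. (As - ths i \<cdot>\<^sub>m 1\<^sub>m (Suc d)) *\<^sub>v x) ` U i = U (i - 1)) \<and>
     (\<lambda>x. (As - ths 0 \<cdot>\<^sub>m 1\<^sub>m (Suc d)) *\<^sub>v x) ` U 0 = {0\<^sub>v (Suc d)}"

end

theory Submission imports Defs begin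

definition lcomb :: "nat \<Rightarrow> (nat \<Rightarrow> 'a::comm_ring_1 vec) \<Rightarrow> (nat \<Rightarrow> 'a) \<Rightarrow> 'a vec" where
  "lcomb d u c = vec (Suc d) (\<lambda>i. \<Sum>k\<le>d. c k * u k $ i)"

definition is_basis :: "nat \<Rightarrow> (nat \<Rightarrow> 'a::comm_ring_1 vec) \<Rightarrow> bool" where
  "is_basis d u \<longleftrightarrow> (\<forall>k\<le>d. u k \<in> carrier_vec (Suc d)) \<and>
     (\<forall>c. lcomb d u c = 0\<^sub>v (Suc d) \<longrightarrow> (\<forall>k\<le>d. c k = 0)) \<and>
     (\<forall>w\<in>carrier_vec (Suc d). \<exists>c. w = lcomb d u c)"

lemma lcomb_carrier[simp]: "lcomb d u c \<in> carrier_vec (Suc d)"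
  by (simp add: lcomb_def)

lemma lcomb_mult:
  assumes B: "B \<in> carrier_mat (Suc d) (Suc d)" and u: "\<And>k. k \<le> d \<Longrightarrow> u k \<in> carrier_vec (Suc d)"
  shows "B *\<^sub>v lcomb d u c = lcomb d (\<lambda>k. B *\<^sub>v u k) c"
proof (rule eq_vecI)
  fix i assume i: "i < dim_vec (lcomb d (\<lambda>k. B *\<^sub>v u k) c)"
  hence i: "i < Suc d" by (simp add: lcomb_def)
  have "(B *\<^sub>v lcomb d u c) $ i = (\<Sum>j<Suc d. B $$ (i,j) * (\<Sum>k\<le>d. c k * u k $ j))"
    using B i by (simp add: lcomb_def scalar_prod_def lessThan_atLeast0)
  also have "\<dots> = (\<Sum>j<Suc d. \<Sum>k\<le>d. c k * (B $$ (i,j) * u k $ j))"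
    by (simp add: sum_distrib_left algebra_simps)
  also have "\<dots> = (\<Sum>k\<le>d. \<Sum>j<Suc d. c k * (B $$ (i,j) * u k $ j))"
    by (rule sum.swap)
  also have "\<dots> = (\<Sum>k\<le>d. c k * (\<Sum>j<Suc d. B $$ (i,j) * u k $ j))"
    by (simp only: sum_distrib_left)
  also have "\<dots> = (\<Sum>k\<le>d. c k * (B *\<^sub>v u k) $ i)"
  proof (intro sum.cong refl)
    fix k assume "k \<in> {..d}"
    hence dk: "dim_vec (u k) = Suc d" using u by auto
    have "(B *\<^sub>v u k) $ i = row B i \<bullet> u k" using B i by simp
    also have "\<dots> = (\<Sum>j<Suc d. B $$ (i,j) * u k $ j)"
      unfolding scalar_prod_def dk lessThan_atLeast0[symmetric] using B i
      by (intro sum.cong refl) auto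
    finally show "c k * (\<Sum>j<Suc d. B $$ (i,j) * u k $ j) = c k * (B *\<^sub>v u k) $ i" by simp
  qed
  also have "\<dots> = lcomb d (\<lambda>k. B *\<^sub>v u k) c $ i" using i by (simp add: lcomb_def)
  finally show "(B *\<^sub>v lcomb d u c) $ i = lcomb d (\<lambda>k. B *\<^sub>v u k) c $ i" .
qed (use B in \<open>simp add: lcomb_def\<close>)

lemma lcomb_single:
  assumes j: "j \<le> d" and uj: "u j \<in> carrier_vec (Suc d)"
    and z: "\<And>k. k \<le> d \<Longrightarrow> k \<noteq> j \<Longrightarrow> c k = 0 \<or> u k = 0\<^sub>v (Suc d)"
  shows "lcomb d u c = c j \<cdot>\<^sub>v u j"
proof (rule eq_vecI)
  fix i assume i: "i < dim_vec (c j \<cdot>\<^sub>v u j)"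
  hence i: "i < Suc d" using uj by simp
  have "(\<Sum>k\<le>d. c k * u k $ i) = (\<Sum>k\<le>d. if k = j then c j * u j $ i else 0)"
  proof (intro sum.cong refl)
    fix k assume "k \<in> {..d}"
    thus "c k * u k $ i = (if k = j then c j * u j $ i else 0)"
      using z[of k] i by (cases "c k = 0") auto
  qed
  also have "\<dots> = c j * u j $ i" using j by simp
  finally show "lcomb d u c $ i = (c j \<cdot>\<^sub>v u j) $ i" using i uj by (simp add: lcomb_def)
qed (use uj in \<open>simp add: lcomb_def\<close>)

lemma lcomb_zero:
  assumes z: "\<And>k. k \<le> d \<Longrightarrow> c k = 0 \<or> u k = 0\<^sub>v (Suc d)"
  shows "lcomb d u c = 0\<^sub>v (Suc d)"
proof (rule eq_vecI)
  fix i assume i: "i < dim_vec (0\<^sub>v (Suc d) :: 'a vec)"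
  hence i: "i < Suc d" by simp
  have "(\<Sum>k\<le>d. c k * u k $ i) = (\<Sum>k\<le>d. 0)"
  proof (intro sum.cong refl)
    fix k assume "k \<in> {..d}"
    thus "c k * u k $ i = 0" using z[of k] i by (cases "c k = 0") auto
  qed
  thus "lcomb d u c $ i = 0\<^sub>v (Suc d) $ i" using i by (simp add: lcomb_def)
qed (simp add: lcomb_def)

lemma sum_atMost_rev: "(\<Sum>k\<le>(d::nat). f (d - k)) = (\<Sum>k\<le>d. f k)"
  by (rule sum.reindex_bij_witness[where i="\<lambda>k. d - k" and j="\<lambda>k. d - k"]) auto

lemma lcomb_rev: "lcomb d (\<lambda>k. u (d - k)) (\<lambda>k. c (d - k)) = lcomb d u c"
  unfolding lcomb_def using sum_atMost_rev[of "\<lambda>k. c k * u k $ _" d] by simp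

lemma lcomb_rev2: "lcomb d (\<lambda>k. u (d - k)) c = lcomb d u (\<lambda>k. c (d - k))"
proof -
  have "(\<Sum>k\<le>d. c k * u (d - k) $ i) = (\<Sum>k\<le>d. c (d - k) * u k $ i)" for i
    by (rule sum.reindex_bij_witness[where i="\<lambda>k. d - k" and j="\<lambda>k. d - k"]) auto
  thus ?thesis unfolding lcomb_def by simp
qed

lemma mat_eq_vecs:
  assumes B: "(B :: 'a :: field mat) \<in> carrier_mat n n" and C: "C \<in> carrier_mat n n"
    and eq: "\<And>w. w \<in> carrier_vec n \<Longrightarrow> B *\<^sub>v w = C *\<^sub>v w"
  shows "B = C"
proof (rule eq_matI)
  fix i j assume "i < dim_row C" "j < dim_col C"
  hence ij: "i < n" "j < n" using C by auto
  have "(B *\<^sub>v unit_vec n j) $ i = (C *\<^sub>v unit_vec n j) $ i" using eq by simp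
  thus "B $$ (i, j) = C $$ (i, j)" using ij B C by simp
qed (use B C in auto)

lemma mat_nonzero_vec:
  assumes B: "(B :: 'a :: field mat) \<in> carrier_mat n n" and nz: "B \<noteq> 0\<^sub>m n n"
  shows "\<exists>w\<in>carrier_vec n. B *\<^sub>v w \<noteq> 0\<^sub>v n"
proof (rule ccontr)
  assume nz': "\<not> ?thesis"
  have "B = 0\<^sub>m n n"
  proof (rule mat_eq_vecs[OF B zero_carrier_mat])
    fix w :: "'a vec" assume w: "w \<in> carrier_vec n"
    hence "B *\<^sub>v w = 0\<^sub>v n" using nz' by blast
    moreover have "0\<^sub>m n n *\<^sub>v w = 0\<^sub>v n" using w by (intro eq_vecI) auto
    ultimately show "B *\<^sub>v w = 0\<^sub>m n n *\<^sub>v w" by simp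
  qed
  with nz show False by simp
qed

lemma indep_basis:
  fixes u :: "nat \<Rightarrow> 'a::field vec"
  assumes u: "\<And>k. k \<le> d \<Longrightarrow> u k \<in> carrier_vec (Suc d)"
    and ind: "\<And>c. lcomb d u c = 0\<^sub>v (Suc d) \<Longrightarrow> \<forall>k\<le>d. c k = 0"
  shows "is_basis d u"
proof -
  let ?n = "Suc d"
  define P where "P = mat ?n ?n (\<lambda>(i,k). u k $ i)"
  have P: "P \<in> carrier_mat ?n ?n" by (simp add: P_def)
  have Pv: "P *\<^sub>v v = lcomb d u (\<lambda>k. v $ k)" if v: "v \<in> carrier_vec ?n" for v
  proof (rule eq_vecI)
    fix i assume "i < dim_vec (lcomb d u (\<lambda>k. v $ k))"
    hence i: "i < ?n" by (simp add: lcomb_def)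
    have "(P *\<^sub>v v) $ i = row P i \<bullet> v" using i P by simp
    also have "\<dots> = (\<Sum>k\<in>{0..<?n}. P $$ (i,k) * v $ k)"
      unfolding scalar_prod_def using v i P by (intro sum.cong) auto
    also have "\<dots> = (\<Sum>k\<in>{0..<?n}. v $ k * u k $ i)"
      using i by (intro sum.cong) (auto simp: P_def)
    also have "{0..<?n} = {..d}" by auto
    finally show "(P *\<^sub>v v) $ i = lcomb d u (\<lambda>k. v $ k) $ i" using i by (simp add: lcomb_def)
  qed (simp add: P_def lcomb_def)
  have "det P \<noteq> 0"
  proof
    assume "det P = 0"
    then obtain v where v: "v \<in> carrier_vec ?n" "v \<noteq> 0\<^sub>v ?n" "P *\<^sub>v v = 0\<^sub>v ?n"
      using det_0_iff_vec_prod_zero_field[OF P] by auto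
    have "lcomb d u (\<lambda>k. v $ k) = 0\<^sub>v ?n" using Pv[OF v(1)] v(3) by simp
    hence "\<forall>k\<le>d. v $ k = 0" by (rule ind)
    hence "v = 0\<^sub>v ?n" using v(1) by (intro eq_vecI) auto
    with v(2) show False by simp
  qed
  from det_non_zero_imp_unit[OF P this, of "()"]
  have "\<exists>Q\<in>carrier_mat ?n ?n. Q * P = 1\<^sub>m ?n \<and> P * Q = 1\<^sub>m ?n"
    unfolding Units_def ring_mat_def by simp
  then obtain Q where Q: "Q \<in> carrier_mat ?n ?n" "P * Q = 1\<^sub>m ?n" by blast
  have span: "\<exists>c. w = lcomb d u c" if w: "w \<in> carrier_vec ?n" for w
  proof -
    have "w = (P * Q) *\<^sub>v w" using Q w by simp
    also have "\<dots> = P *\<^sub>v (Q *\<^sub>v w)" using P Q w by (intro assoc_mult_mat_vec) auto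
    also have "\<dots> = lcomb d u (\<lambda>k. (Q *\<^sub>v w) $ k)" using Pv Q w by simp
    finally show ?thesis by blast
  qed
  show ?thesis unfolding is_basis_def using u ind span by blast
qed

lemma basis_carrier: "is_basis d u \<Longrightarrow> k \<le> d \<Longrightarrow> u k \<in> carrier_vec (Suc d)"
  unfolding is_basis_def by simp

lemma basis_indep: "is_basis d u \<Longrightarrow> lcomb d u c = 0\<^sub>v (Suc d) \<Longrightarrow> k \<le> d \<Longrightarrow> c k = 0"
  unfolding is_basis_def by simp

lemma basis_span: "is_basis d u \<Longrightarrow> w \<in> carrier_vec (Suc d) \<Longrightarrow> \<exists>c. w = lcomb d u c"
  unfolding is_basis_def by simp

lemma basis_rev: assumes b: "is_basis d u" shows "is_basis d (\<lambda>k. u (d - k))"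
  unfolding is_basis_def
proof (intro conjI allI impI ballI)
  fix k assume "k \<le> d" thus "u (d - k) \<in> carrier_vec (Suc d)" using basis_carrier[OF b] by simp
next
  fix c k assume h: "lcomb d (\<lambda>k. u (d - k)) c = 0\<^sub>v (Suc d)" and k: "k \<le> d"
  have "lcomb d u (\<lambda>k. c (d - k)) = 0\<^sub>v (Suc d)"
    using h unfolding lcomb_rev2[of d u c] .
  hence "c (d - (d - k)) = 0" by (rule basis_indep[OF b]) simp
  thus "c k = 0" using k by simp
next
  fix w :: "'a vec" assume "w \<in> carrier_vec (Suc d)"
  then obtain c where "w = lcomb d u c" using basis_span[OF b] by blast
  also have "\<dots> = lcomb d (\<lambda>k. u (d - k)) (\<lambda>k. c (d - k))" by (rule lcomb_rev[symmetric])
  finally show "\<exists>c. w = lcomb d (\<lambda>k. u (d - k)) c" by blast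
qed

lemma smult_mat_vec:
  assumes "(A :: 'a :: field mat) \<in> carrier_mat n n" "v \<in> carrier_vec n"
  shows "(a \<cdot>\<^sub>m A) *\<^sub>v v = a \<cdot>\<^sub>v (A *\<^sub>v v)"
  using assms by (intro eq_vecI) (auto simp: scalar_prod_def sum_distrib_left ac_simps)

lemma mat_vec_zero[simp]: "(M :: 'a :: semiring_0 mat) \<in> carrier_mat nr n \<Longrightarrow> M *\<^sub>v 0\<^sub>v n = 0\<^sub>v nr"
  by (intro eq_vecI) (auto simp: scalar_prod_def)

lemma zero_mat_vec[simp]: "(x :: 'a :: semiring_0 vec) \<in> carrier_vec n \<Longrightarrow> 0\<^sub>m nr n *\<^sub>v x = 0\<^sub>v nr"
  by (intro eq_vecI) (auto simp: scalar_prod_def)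

lemma smult_zero_vec'[simp]: "c \<cdot>\<^sub>v 0\<^sub>v n = (0\<^sub>v n :: 'a :: semiring_0 vec)"
  by (intro eq_vecI) auto

lemma vec_minus_zero'[simp]: "(x :: 'a :: ab_group_add vec) \<in> carrier_vec n \<Longrightarrow> x - 0\<^sub>v n = x"
  by (intro eq_vecI) auto

lemma smult_vec_zero_iff:
  assumes "(x :: 'a :: field vec) \<in> carrier_vec n"
  shows "(c \<cdot>\<^sub>v x = 0\<^sub>v n) \<longleftrightarrow> (c = 0 \<or> x = 0\<^sub>v n)"
proof
  assume h: "c \<cdot>\<^sub>v x = 0\<^sub>v n"
  show "c = 0 \<or> x = 0\<^sub>v n"
  proof (cases "c = 0")
    case False
    have "x = 0\<^sub>v n"
    proof (rule eq_vecI)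
      fix i assume "i < dim_vec (0\<^sub>v n :: 'a vec)"
      hence i: "i < n" by simp
      have "(c \<cdot>\<^sub>v x) $ i = 0" using h i by simp
      hence "c * x $ i = 0" using i assms by simp
      thus "x $ i = 0\<^sub>v n $ i" using False i by simp
    qed (use assms in simp)
    thus ?thesis by simp
  qed simp
next
  assume "c = 0 \<or> x = 0\<^sub>v n"
  thus "c \<cdot>\<^sub>v x = 0\<^sub>v n" using assms by (auto intro!: eq_vecI)
qed

lemma zero_smult_vec': "(x :: 'a :: field vec) \<in> carrier_vec n \<Longrightarrow> 0 \<cdot>\<^sub>v x = 0\<^sub>v n"
  by (intro eq_vecI) auto

lemma lcomb_cong: "(\<And>k. k \<le> d \<Longrightarrow> u k = v k) \<Longrightarrow> (\<And>k. k \<le> d \<Longrightarrow> c k = e k) \<Longrightarrow>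
  lcomb d u c = lcomb d v e"
  unfolding lcomb_def by (intro arg_cong[where f="vec (Suc d)"] ext sum.cong) auto

lemma lcomb_smult1:
  assumes u: "\<And>k. k \<le> d \<Longrightarrow> u k \<in> carrier_vec (Suc d)"
  shows "lcomb d (\<lambda>j. c j \<cdot>\<^sub>v u j) (\<lambda>_. 1) = lcomb d u c"
proof (rule eq_vecI)
  fix i assume "i < dim_vec (lcomb d u c)"
  hence i: "i < Suc d" by (simp add: lcomb_def)
  have "(\<Sum>k\<le>d. 1 * (c k \<cdot>\<^sub>v u k) $ i) = (\<Sum>k\<le>d. c k * u k $ i)"
  proof (intro sum.cong refl)
    fix k assume "k \<in> {..d}"
    hence "u k \<in> carrier_vec (Suc d)" using u by auto
    thus "1 * (c k \<cdot>\<^sub>v u k) $ i = c k * u k $ i" using i by simp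
  qed
  thus "lcomb d (\<lambda>j. c j \<cdot>\<^sub>v u j) (\<lambda>_. 1) $ i = lcomb d u c $ i" using i by (simp add: lcomb_def)
qed (simp add: lcomb_def)

lemma mat_eq_on_basis:
  assumes b: "is_basis d u" and B: "(B :: 'a :: field mat) \<in> carrier_mat (Suc d) (Suc d)"
    and C: "C \<in> carrier_mat (Suc d) (Suc d)" and eq: "\<And>k. k \<le> d \<Longrightarrow> B *\<^sub>v u k = C *\<^sub>v u k"
  shows "B = C"
proof (rule mat_eq_vecs[OF B C])
  fix w :: "'a vec" assume "w \<in> carrier_vec (Suc d)"
  then obtain c where w: "w = lcomb d u c" using basis_span[OF b] by blast
  have u: "\<And>k. k \<le> d \<Longrightarrow> u k \<in> carrier_vec (Suc d)" using basis_carrier[OF b] by blast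
  have "B *\<^sub>v w = lcomb d (\<lambda>k. B *\<^sub>v u k) c" unfolding w by (rule lcomb_mult[OF B u])
  also have "\<dots> = lcomb d (\<lambda>k. C *\<^sub>v u k) c" by (rule lcomb_cong) (auto simp: eq)
  also have "\<dots> = C *\<^sub>v w" unfolding w by (rule lcomb_mult[OF C u, symmetric])
  finally show "B *\<^sub>v w = C *\<^sub>v w" .
qed

definition pfact :: "nat \<Rightarrow> 'a::field mat \<Rightarrow> (nat \<Rightarrow> 'a) \<Rightarrow> nat \<Rightarrow> nat \<Rightarrow> 'a mat" where
  "pfact d A th i j = (1 / (th i - th j)) \<cdot>\<^sub>m (A - th j \<cdot>\<^sub>m 1\<^sub>m (Suc d))"

lemma prim_idem_foldr: "prim_idem d A th i =
   foldr (\<lambda>j M. pfact d A th i j * M) (filter (\<lambda>j. j \<noteq> i) [0..<Suc d]) (1\<^sub>m (Suc d))"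
  unfolding prim_idem_def pfact_def ..

lemma pfact_carrier: "A \<in> carrier_mat (Suc d) (Suc d) \<Longrightarrow> pfact d A th i j \<in> carrier_mat (Suc d) (Suc d)"
  unfolding pfact_def by (intro smult_carrier_mat minus_carrier_mat) simp

lemma foldr_pfact_carrier:
  assumes A: "A \<in> carrier_mat (Suc d) (Suc d)"
  shows "foldr (\<lambda>j M. pfact d A th i j * M) js (1\<^sub>m (Suc d)) \<in> carrier_mat (Suc d) (Suc d)"
  by (induction js) (auto intro!: mult_carrier_mat pfact_carrier[OF A])

lemma prim_idem_carrier:
  "A \<in> carrier_mat (Suc d) (Suc d) \<Longrightarrow> prim_idem d A th i \<in> carrier_mat (Suc d) (Suc d)"
  unfolding prim_idem_foldr by (rule foldr_pfact_carrier)

lemma pfact_eigvec: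
  assumes A: "(A :: 'a :: field mat) \<in> carrier_mat (Suc d) (Suc d)" and x: "x \<in> carrier_vec (Suc d)"
    and ev: "A *\<^sub>v x = t \<cdot>\<^sub>v x"
  shows "pfact d A th i j *\<^sub>v x = ((t - th j) / (th i - th j)) \<cdot>\<^sub>v x"
proof -
  have "(A - th j \<cdot>\<^sub>m 1\<^sub>m (Suc d)) *\<^sub>v x = A *\<^sub>v x - (th j \<cdot>\<^sub>m 1\<^sub>m (Suc d)) *\<^sub>v x"
    using A x by (intro minus_mult_distrib_mat_vec) auto
  also have "(th j \<cdot>\<^sub>m 1\<^sub>m (Suc d)) *\<^sub>v x = th j \<cdot>\<^sub>v x"
    using x by (subst smult_mat_vec) auto
  also have "A *\<^sub>v x - th j \<cdot>\<^sub>v x = (t - th j) \<cdot>\<^sub>v x"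
    unfolding ev using x by (intro eq_vecI) (auto simp: algebra_simps)
  finally have h: "(A - th j \<cdot>\<^sub>m 1\<^sub>m (Suc d)) *\<^sub>v x = (t - th j) \<cdot>\<^sub>v x" .
  show ?thesis unfolding pfact_def using A x
    by (subst smult_mat_vec[of _ "Suc d"]) (auto simp: h smult_smult_assoc)
qed

lemma foldr_pfact_eigvec:
  assumes A: "(A :: 'a :: field mat) \<in> carrier_mat (Suc d) (Suc d)" and x: "x \<in> carrier_vec (Suc d)"
    and ev: "A *\<^sub>v x = t \<cdot>\<^sub>v x"
  shows "foldr (\<lambda>j M. pfact d A th i j * M) js (1\<^sub>m (Suc d)) *\<^sub>v x =
     prod_list (map (\<lambda>j. (t - th j) / (th i - th j)) js) \<cdot>\<^sub>v x"
proof (induction js)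
  case Nil
  then show ?case using x by simp
next
  case (Cons j js)
  let ?M = "foldr (\<lambda>j M. pfact d A th i j * M) js (1\<^sub>m (Suc d))"
  have M: "?M \<in> carrier_mat (Suc d) (Suc d)" by (rule foldr_pfact_carrier[OF A])
  have P: "pfact d A th i j \<in> carrier_mat (Suc d) (Suc d)" by (rule pfact_carrier[OF A])
  have "(pfact d A th i j * ?M) *\<^sub>v x = pfact d A th i j *\<^sub>v (?M *\<^sub>v x)"
    using M P x by (intro assoc_mult_mat_vec) auto
  also have "\<dots> = pfact d A th i j *\<^sub>v (prod_list (map (\<lambda>j. (t - th j) / (th i - th j)) js) \<cdot>\<^sub>v x)"
    using Cons by simp
  also have "\<dots> = prod_list (map (\<lambda>j. (t - th j) / (th i - th j)) js) \<cdot>\<^sub>v (pfact d A th i j *\<^sub>v x)"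
    using P x by (rule mult_mat_vec)
  also have "\<dots> = prod_list (map (\<lambda>j. (t - th j) / (th i - th j)) (j # js)) \<cdot>\<^sub>v x"
    using pfact_eigvec[OF A x ev] by (simp add: smult_smult_assoc mult.commute)
  finally show ?case by simp
qed

lemma prim_idem_eigvec:
  assumes A: "(A :: 'a :: field mat) \<in> carrier_mat (Suc d) (Suc d)" and x: "x \<in> carrier_vec (Suc d)"
    and ev: "A *\<^sub>v x = th k \<cdot>\<^sub>v x" and inj: "inj_on th {..d}" and i: "i \<le> d" and k: "k \<le> d"
  shows "prim_idem d A th i *\<^sub>v x = (if i = k then x else 0\<^sub>v (Suc d))"
proof -
  let ?js = "filter (\<lambda>j. j \<noteq> i) [0..<Suc d]"
  have e: "prim_idem d A th i *\<^sub>v x = prod_list (map (\<lambda>j. (th k - th j) / (th i - th j)) ?js) \<cdot>\<^sub>v x"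
    unfolding prim_idem_foldr by (rule foldr_pfact_eigvec[OF A x ev])
  show ?thesis
  proof (cases "i = k")
    case True
    have m: "map (\<lambda>j. (th k - th j) / (th i - th j)) ?js = map (\<lambda>j. 1) ?js"
    proof (rule map_cong[OF refl])
      fix j assume "j \<in> set ?js"
      hence "j \<noteq> i" "j \<le> d" by (auto simp del: upt_Suc)
      hence "th i \<noteq> th j" using inj i unfolding inj_on_def by blast
      thus "(th k - th j) / (th i - th j) = 1" using True by simp
    qed
    moreover have o: "prod_list (map (\<lambda>j. (1::'a)) xs) = 1" for xs :: "nat list"
      by (induction xs) auto
    ultimately have p: "prod_list (map (\<lambda>j. (th k - th j) / (th i - th j)) ?js) = 1"
      by (simp only:)
    show ?thesis unfolding e p using True x by simp
  next
    case False
    have "k \<in> set ?js" using False k by (auto simp del: upt_Suc)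
    hence "0 \<in> set (map (\<lambda>j. (th k - th j) / (th i - th j)) ?js)" by force
    hence p: "prod_list (map (\<lambda>j. (th k - th j) / (th i - th j)) ?js) = 0"
      by (simp only: prod_list_zero_iff)
    show ?thesis unfolding e p using False smult_vec_zero_iff[OF x] by simp
  qed
qed


definition spectral :: "nat \<Rightarrow> 'a::field mat \<Rightarrow> (nat \<Rightarrow> 'a) \<Rightarrow> (nat \<Rightarrow> 'a mat) \<Rightarrow> bool" where
  "spectral d M th E \<longleftrightarrow> M \<in> carrier_mat (Suc d) (Suc d) \<and> inj_on th {..d} \<and>
     (\<forall>j\<le>d. E j \<in> carrier_mat (Suc d) (Suc d)) \<and>
     (\<forall>j\<le>d. E j * M = th j \<cdot>\<^sub>m E j) \<and> (\<forall>j\<le>d. M * E j = th j \<cdot>\<^sub>m E j) \<and>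
     (\<forall>i\<le>d. \<forall>j\<le>d. E i * E j = (if i = j then E j else 0\<^sub>m (Suc d) (Suc d))) \<and>
     (\<forall>w\<in>carrier_vec (Suc d). w = lcomb d (\<lambda>j. E j *\<^sub>v w) (\<lambda>_. 1)) \<and>
     (\<forall>j\<le>d. \<exists>x\<in>carrier_vec (Suc d). x \<noteq> 0\<^sub>v (Suc d) \<and> E j *\<^sub>v x = x \<and>
        (\<forall>w\<in>carrier_vec (Suc d). \<exists>c. E j *\<^sub>v w = c \<cdot>\<^sub>v x))"

lemma spectral_prim_idem:
  fixes A :: "'a::field mat"
  assumes eo: "eigenvalue_ordering d A th"
  shows "spectral d A th (prim_idem d A th)"
proof -
  let ?n = "Suc d"
  let ?E = "prim_idem d A th"
  have A: "A \<in> carrier_mat ?n ?n" and inj: "inj_on th {..d}" and ev: "\<And>k. k \<le> d \<Longrightarrow> eigenvalue A (th k)"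
    using eo unfolding eigenvalue_ordering_def by auto
  define x where "x k = (SOME v. eigenvector A v (th k))" for k
  have xe: "eigenvector A (x k) (th k)" if "k \<le> d" for k
    using ev[OF that] unfolding eigenvalue_def x_def by (rule someI_ex)
  have xc: "x k \<in> carrier_vec ?n" and xnz: "x k \<noteq> 0\<^sub>v ?n" and xA: "A *\<^sub>v x k = th k \<cdot>\<^sub>v x k"
    if "k \<le> d" for k using xe[OF that] A unfolding eigenvector_def by auto
  have Ec: "?E j \<in> carrier_mat ?n ?n" for j by (rule prim_idem_carrier[OF A])
  have Ex: "?E i *\<^sub>v x k = (if i = k then x k else 0\<^sub>v ?n)" if "i \<le> d" "k \<le> d" for i k
    by (rule prim_idem_eigvec[OF A xc[OF that(2)] xA[OF that(2)] inj that])
  have Elc: "?E j *\<^sub>v lcomb d x c = c j \<cdot>\<^sub>v x j" if j: "j \<le> d" for j c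
  proof -
    have "?E j *\<^sub>v lcomb d x c = lcomb d (\<lambda>k. ?E j *\<^sub>v x k) c"
      by (rule lcomb_mult[OF Ec xc])
    also have "\<dots> = c j \<cdot>\<^sub>v (?E j *\<^sub>v x j)"
      by (rule lcomb_single[OF j]) (use Ec xc j Ex in auto)
    also have "?E j *\<^sub>v x j = x j" using Ex j by simp
    finally show ?thesis .
  qed
  have basis: "is_basis d x"
  proof (rule indep_basis[OF xc])
    fix c assume h: "lcomb d x c = 0\<^sub>v ?n"
    show "\<forall>k\<le>d. c k = 0"
    proof (intro allI impI)
      fix k assume k: "k \<le> d"
      have "c k \<cdot>\<^sub>v x k = ?E k *\<^sub>v lcomb d x c" using Elc[OF k] by simp
      also have "\<dots> = 0\<^sub>v ?n" unfolding h using Ec[of k] by simp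
      finally show "c k = 0" using smult_vec_zero_iff[OF xc[OF k]] xnz[OF k] by simp
    qed
  qed simp
  have EA: "?E j * A = th j \<cdot>\<^sub>m ?E j" if j: "j \<le> d" for j
  proof (rule mat_eq_on_basis[OF basis])
    fix k assume k: "k \<le> d"
    have "(?E j * A) *\<^sub>v x k = ?E j *\<^sub>v (A *\<^sub>v x k)" using Ec A xc[OF k] by (intro assoc_mult_mat_vec) auto
    also have "\<dots> = th k \<cdot>\<^sub>v (?E j *\<^sub>v x k)" unfolding xA[OF k] using Ec xc[OF k] by (rule mult_mat_vec)
    also have "\<dots> = th j \<cdot>\<^sub>v (?E j *\<^sub>v x k)" using Ex[OF j k] xc[OF k] by (cases "j = k") auto
    also have "\<dots> = (th j \<cdot>\<^sub>m ?E j) *\<^sub>v x k" using Ec xc[OF k] by (intro smult_mat_vec[symmetric]) auto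
    finally show "(?E j * A) *\<^sub>v x k = (th j \<cdot>\<^sub>m ?E j) *\<^sub>v x k" .
  qed (auto intro: mult_carrier_mat[OF Ec A] mult_carrier_mat[OF A Ec] Ec smult_carrier_mat)
  have AE: "A * ?E j = th j \<cdot>\<^sub>m ?E j" if j: "j \<le> d" for j
  proof (rule mat_eq_on_basis[OF basis])
    fix k assume k: "k \<le> d"
    have "(A * ?E j) *\<^sub>v x k = A *\<^sub>v (?E j *\<^sub>v x k)" using Ec A xc[OF k] by (intro assoc_mult_mat_vec) auto
    also have "\<dots> = th j \<cdot>\<^sub>v (?E j *\<^sub>v x k)" using Ex[OF j k] xc[OF k] xA[OF k] A by (cases "j = k") auto
    also have "\<dots> = (th j \<cdot>\<^sub>m ?E j) *\<^sub>v x k" using Ec xc[OF k] by (intro smult_mat_vec[symmetric]) auto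
    finally show "(A * ?E j) *\<^sub>v x k = (th j \<cdot>\<^sub>m ?E j) *\<^sub>v x k" .
  qed (auto intro: mult_carrier_mat[OF Ec A] mult_carrier_mat[OF A Ec] Ec smult_carrier_mat)
  have EE: "?E i * ?E j = (if i = j then ?E j else 0\<^sub>m ?n ?n)" if i: "i \<le> d" and j: "j \<le> d" for i j
  proof (rule mat_eq_on_basis[OF basis])
    fix k assume k: "k \<le> d"
    have "(?E i * ?E j) *\<^sub>v x k = ?E i *\<^sub>v (?E j *\<^sub>v x k)" by (rule assoc_mult_mat_vec[OF Ec Ec xc[OF k]])
    also have "\<dots> = (if i = j then ?E j else 0\<^sub>m ?n ?n) *\<^sub>v x k"
      using Ex[OF j k] Ex[OF i k] xc[OF k] Ec[of i] by (cases "j = k") auto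
    finally show "(?E i * ?E j) *\<^sub>v x k = (if i = j then ?E j else 0\<^sub>m ?n ?n) *\<^sub>v x k" .
  qed (auto intro: mult_carrier_mat[OF Ec Ec] Ec smult_carrier_mat)
  have sum: "w = lcomb d (\<lambda>j. ?E j *\<^sub>v w) (\<lambda>_. 1)" if w: "w \<in> carrier_vec ?n" for w
  proof -
    obtain c where wc: "w = lcomb d x c" using basis_span[OF basis w] by blast
    have "lcomb d (\<lambda>j. ?E j *\<^sub>v w) (\<lambda>_. 1) = lcomb d (\<lambda>j. c j \<cdot>\<^sub>v x j) (\<lambda>_. 1)"
      by (rule lcomb_cong) (auto simp: wc Elc)
    also have "\<dots> = lcomb d x c" by (rule lcomb_smult1[OF xc])
    finally show ?thesis using wc by simp
  qed
  have rk: "\<exists>y\<in>carrier_vec ?n. y \<noteq> 0\<^sub>v ?n \<and> ?E j *\<^sub>v y = y \<and> (\<forall>w\<in>carrier_vec ?n. \<exists>c. ?E j *\<^sub>v w = c \<cdot>\<^sub>v y)"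
    if j: "j \<le> d" for j
  proof (intro bexI conjI ballI)
    show "x j \<in> carrier_vec ?n" "x j \<noteq> 0\<^sub>v ?n" using xc xnz j by auto
    show "?E j *\<^sub>v x j = x j" using Ex j by simp
    fix w :: "'a vec" assume "w \<in> carrier_vec ?n"
    then obtain c where wc: "w = lcomb d x c" using basis_span[OF basis] by blast
    show "\<exists>c. ?E j *\<^sub>v w = c \<cdot>\<^sub>v x j" unfolding wc using Elc[OF j] by blast
  qed
  show ?thesis unfolding spectral_def using A inj Ec EA AE EE sum rk by blast
qed


lemma sp_M: "spectral d M th E \<Longrightarrow> M \<in> carrier_mat (Suc d) (Suc d)"
  unfolding spectral_def by simp
lemma sp_inj: "spectral d M th E \<Longrightarrow> inj_on th {..d}"
  unfolding spectral_def by simp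
lemma sp_th: "spectral d M th E \<Longrightarrow> i \<le> d \<Longrightarrow> j \<le> d \<Longrightarrow> i \<noteq> j \<Longrightarrow> th i \<noteq> th j"
  unfolding spectral_def inj_on_def by auto
lemma sp_Ec: "spectral d M th E \<Longrightarrow> j \<le> d \<Longrightarrow> E j \<in> carrier_mat (Suc d) (Suc d)"
  unfolding spectral_def by simp
lemma sp_EM: "spectral d M th E \<Longrightarrow> j \<le> d \<Longrightarrow> E j * M = th j \<cdot>\<^sub>m E j"
  unfolding spectral_def by simp
lemma sp_ME: "spectral d M th E \<Longrightarrow> j \<le> d \<Longrightarrow> M * E j = th j \<cdot>\<^sub>m E j"
  unfolding spectral_def by simp
lemma sp_EE: "spectral d M th E \<Longrightarrow> i \<le> d \<Longrightarrow> j \<le> d \<Longrightarrow>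
   E i * E j = (if i = j then E j else 0\<^sub>m (Suc d) (Suc d))"
  unfolding spectral_def by simp
lemma sp_sum: "spectral d M th E \<Longrightarrow> w \<in> carrier_vec (Suc d) \<Longrightarrow>
   w = lcomb d (\<lambda>j. E j *\<^sub>v w) (\<lambda>_. 1)"
  unfolding spectral_def by simp
lemma sp_rank: "spectral d M th E \<Longrightarrow> j \<le> d \<Longrightarrow>
   \<exists>x\<in>carrier_vec (Suc d). x \<noteq> 0\<^sub>v (Suc d) \<and> E j *\<^sub>v x = x \<and>
        (\<forall>w\<in>carrier_vec (Suc d). \<exists>c. E j *\<^sub>v w = c \<cdot>\<^sub>v x)"
  unfolding spectral_def by simp

lemma minus_smult_one_vec:
  assumes M: "(M :: 'a :: field mat) \<in> carrier_mat n n" and w: "w \<in> carrier_vec n"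
  shows "(M - t \<cdot>\<^sub>m 1\<^sub>m n) *\<^sub>v w = M *\<^sub>v w - t \<cdot>\<^sub>v w"
proof -
  have "(M - t \<cdot>\<^sub>m 1\<^sub>m n) *\<^sub>v w = M *\<^sub>v w - (t \<cdot>\<^sub>m 1\<^sub>m n) *\<^sub>v w"
    using M w by (intro minus_mult_distrib_mat_vec) auto
  also have "(t \<cdot>\<^sub>m 1\<^sub>m n) *\<^sub>v w = t \<cdot>\<^sub>v w"
    using w by (subst smult_mat_vec) auto
  finally show ?thesis .
qed

lemma sp_EMw:
  assumes sp: "spectral d M th E" and j: "j \<le> d" and w: "w \<in> carrier_vec (Suc d)"
  shows "E j *\<^sub>v (M *\<^sub>v w) = th j \<cdot>\<^sub>v (E j *\<^sub>v w)"
proof -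
  have "E j *\<^sub>v (M *\<^sub>v w) = (E j * M) *\<^sub>v w"
    by (rule assoc_mult_mat_vec[OF sp_Ec[OF sp j] sp_M[OF sp] w, symmetric])
  also have "\<dots> = th j \<cdot>\<^sub>v (E j *\<^sub>v w)" unfolding sp_EM[OF sp j]
    by (rule smult_mat_vec[OF sp_Ec[OF sp j] w])
  finally show ?thesis .
qed

lemma sp_Eminus:
  assumes sp: "spectral d M th E" and j: "j \<le> d" and w: "w \<in> carrier_vec (Suc d)"
  shows "E j *\<^sub>v ((M - t \<cdot>\<^sub>m 1\<^sub>m (Suc d)) *\<^sub>v w) = (th j - t) \<cdot>\<^sub>v (E j *\<^sub>v w)"
proof -
  have Ej: "E j \<in> carrier_mat (Suc d) (Suc d)" by (rule sp_Ec[OF sp j])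
  have M: "M \<in> carrier_mat (Suc d) (Suc d)" by (rule sp_M[OF sp])
  have "E j *\<^sub>v ((M - t \<cdot>\<^sub>m 1\<^sub>m (Suc d)) *\<^sub>v w) = E j *\<^sub>v (M *\<^sub>v w - t \<cdot>\<^sub>v w)"
    unfolding minus_smult_one_vec[OF M w] ..
  also have "\<dots> = E j *\<^sub>v (M *\<^sub>v w) - E j *\<^sub>v (t \<cdot>\<^sub>v w)"
    using Ej M w by (intro mult_minus_distrib_mat_vec) auto
  also have "\<dots> = th j \<cdot>\<^sub>v (E j *\<^sub>v w) - t \<cdot>\<^sub>v (E j *\<^sub>v w)"
    unfolding sp_EMw[OF sp j w] mult_mat_vec[OF Ej w] ..
  also have "\<dots> = (th j - t) \<cdot>\<^sub>v (E j *\<^sub>v w)"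
    using Ej w by (intro eq_vecI) (auto simp: algebra_simps)
  finally show ?thesis .
qed

lemma sp_zero:
  assumes sp: "spectral d M th E" and w: "w \<in> carrier_vec (Suc d)"
    and z: "\<And>j. j \<le> d \<Longrightarrow> E j *\<^sub>v w = 0\<^sub>v (Suc d)"
  shows "w = 0\<^sub>v (Suc d)"
proof -
  have "w = lcomb d (\<lambda>j. E j *\<^sub>v w) (\<lambda>_. 1)" by (rule sp_sum[OF sp w])
  also have "\<dots> = 0\<^sub>v (Suc d)" by (rule lcomb_zero) (use z in auto)
  finally show ?thesis .
qed

lemma sp_lin:
  assumes sp: "spectral d M th E" and B: "B \<in> carrier_mat (Suc d) (Suc d)" and w: "w \<in> carrier_vec (Suc d)"
  shows "B *\<^sub>v w = lcomb d (\<lambda>j. B *\<^sub>v (E j *\<^sub>v w)) (\<lambda>_. 1)"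
proof -
  have "B *\<^sub>v w = B *\<^sub>v lcomb d (\<lambda>j. E j *\<^sub>v w) (\<lambda>_. 1)" using sp_sum[OF sp w] by simp
  also have "\<dots> = lcomb d (\<lambda>j. B *\<^sub>v (E j *\<^sub>v w)) (\<lambda>_. 1)"
    by (rule lcomb_mult[OF B]) (rule mult_mat_vec_carrier[OF sp_Ec[OF sp] w])
  finally show ?thesis .
qed

lemma sp_lin_zero:
  assumes sp: "spectral d M th E" and B: "B \<in> carrier_mat (Suc d) (Suc d)" and w: "w \<in> carrier_vec (Suc d)"
    and z: "\<And>j. j \<le> d \<Longrightarrow> B *\<^sub>v (E j *\<^sub>v w) = 0\<^sub>v (Suc d)"
  shows "B *\<^sub>v w = 0\<^sub>v (Suc d)"
  unfolding sp_lin[OF sp B w] by (rule lcomb_zero) (use z in auto)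

lemma sp_lin_single:
  assumes sp: "spectral d M th E" and B: "B \<in> carrier_mat (Suc d) (Suc d)" and w: "w \<in> carrier_vec (Suc d)"
    and j0: "j0 \<le> d" and z: "\<And>j. j \<le> d \<Longrightarrow> j \<noteq> j0 \<Longrightarrow> B *\<^sub>v (E j *\<^sub>v w) = 0\<^sub>v (Suc d)"
  shows "B *\<^sub>v w = B *\<^sub>v (E j0 *\<^sub>v w)"
proof -
  have "B *\<^sub>v w = 1 \<cdot>\<^sub>v (B *\<^sub>v (E j0 *\<^sub>v w))"
    unfolding sp_lin[OF sp B w] by (rule lcomb_single[OF j0]) (use z B sp_Ec[OF sp j0] w in auto)
  also have "\<dots> = B *\<^sub>v (E j0 *\<^sub>v w)" by simp
  finally show ?thesis .
qed

lemma sp_eig: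
  assumes sp: "spectral d M th E" and w: "w \<in> carrier_vec (Suc d)" and ev: "M *\<^sub>v w = th k \<cdot>\<^sub>v w"
    and j: "j \<le> d" and k: "k \<le> d" and jk: "j \<noteq> k"
  shows "E j *\<^sub>v w = 0\<^sub>v (Suc d)"
proof -
  have M: "M \<in> carrier_mat (Suc d) (Suc d)" by (rule sp_M[OF sp])
  have "(M - th k \<cdot>\<^sub>m 1\<^sub>m (Suc d)) *\<^sub>v w = 0\<^sub>v (Suc d)"
    unfolding minus_smult_one_vec[OF M w] ev using w by (intro eq_vecI) auto
  hence "(th j - th k) \<cdot>\<^sub>v (E j *\<^sub>v w) = 0\<^sub>v (Suc d)"
    using sp_Eminus[OF sp j w, of "th k"] sp_Ec[OF sp j] by simp
  thus ?thesis using smult_vec_zero_iff[of "E j *\<^sub>v w" "Suc d" "th j - th k"] sp_Ec[OF sp j] w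
      sp_th[OF sp j k jk] by auto
qed

lemma sp_rank1:
  assumes sp: "spectral d M th E" and B: "B \<in> carrier_mat (Suc d) (Suc d)" and j: "j \<le> d"
    and BE: "B * E j \<noteq> 0\<^sub>m (Suc d) (Suc d)" and w: "w \<in> carrier_vec (Suc d)"
    and Ew: "E j *\<^sub>v w \<noteq> 0\<^sub>v (Suc d)"
  shows "B *\<^sub>v (E j *\<^sub>v w) \<noteq> 0\<^sub>v (Suc d)"
proof -
  have Ej: "E j \<in> carrier_mat (Suc d) (Suc d)" by (rule sp_Ec[OF sp j])
  obtain x where x: "x \<in> carrier_vec (Suc d)" "x \<noteq> 0\<^sub>v (Suc d)"
    and rk: "\<And>w. w \<in> carrier_vec (Suc d) \<Longrightarrow> \<exists>c. E j *\<^sub>v w = c \<cdot>\<^sub>v x"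
    using sp_rank[OF sp j] by blast
  obtain v where v: "v \<in> carrier_vec (Suc d)" and Bv: "(B * E j) *\<^sub>v v \<noteq> 0\<^sub>v (Suc d)"
    using mat_nonzero_vec[OF mult_carrier_mat[OF B Ej] BE] by blast
  obtain c' where c': "E j *\<^sub>v v = c' \<cdot>\<^sub>v x" using rk[OF v] by blast
  have "(B * E j) *\<^sub>v v = c' \<cdot>\<^sub>v (B *\<^sub>v x)"
    unfolding assoc_mult_mat_vec[OF B Ej v] c' by (rule mult_mat_vec[OF B x(1)])
  hence Bx: "B *\<^sub>v x \<noteq> 0\<^sub>v (Suc d)" using Bv B x(1) by auto
  obtain c where c: "E j *\<^sub>v w = c \<cdot>\<^sub>v x" using rk[OF w] by blast
  have "c \<noteq> 0" using Ew c x(1) by auto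
  have "B *\<^sub>v (E j *\<^sub>v w) = c \<cdot>\<^sub>v (B *\<^sub>v x)" unfolding c by (rule mult_mat_vec[OF B x(1)])
  thus ?thesis using \<open>c \<noteq> 0\<close> Bx smult_vec_zero_iff[of "B *\<^sub>v x" "Suc d" c] B x(1) by auto
qed

lemma sp_basis_nz:
  assumes sp: "spectral d M th E" and b: "is_basis d u" and l: "l \<le> d"
  shows "\<exists>k\<le>d. E l *\<^sub>v u k \<noteq> 0\<^sub>v (Suc d)"
proof (rule ccontr)
  assume "\<not> ?thesis"
  hence z: "\<And>k. k \<le> d \<Longrightarrow> E l *\<^sub>v u k = 0\<^sub>v (Suc d)" by auto
  have El: "E l \<in> carrier_mat (Suc d) (Suc d)" by (rule sp_Ec[OF sp l])
  obtain x where x: "x \<in> carrier_vec (Suc d)" "x \<noteq> 0\<^sub>v (Suc d)" "E l *\<^sub>v x = x"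
    using sp_rank[OF sp l] by blast
  obtain c where xc: "x = lcomb d u c" using basis_span[OF b x(1)] by blast
  have "E l *\<^sub>v x = lcomb d (\<lambda>k. E l *\<^sub>v u k) c" unfolding xc
    by (rule lcomb_mult[OF El basis_carrier[OF b]])
  also have "\<dots> = 0\<^sub>v (Suc d)" by (rule lcomb_zero) (use z in auto)
  finally show False using x by simp
qed

lemma sp_rev:
  assumes sp: "spectral d M th E"
  shows "spectral d M (\<lambda>k. th (d - k)) (\<lambda>k. E (d - k))"
  unfolding spectral_def
proof (intro conjI allI impI ballI)
  show "M \<in> carrier_mat (Suc d) (Suc d)" by (rule sp_M[OF sp])
  show "inj_on (\<lambda>k. th (d - k)) {..d}"
  proof (rule inj_onI)
    fix a b assume a: "a \<in> {..d}" and b: "b \<in> {..d}" and e: "th (d - a) = th (d - b)"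
    have "d - a = d - b" using sp_inj[OF sp] e unfolding inj_on_def by auto
    thus "a = b" using a b by auto
  qed
  fix j assume j: "j \<le> d"
  hence j': "d - j \<le> d" by simp
  show "E (d - j) \<in> carrier_mat (Suc d) (Suc d)" by (rule sp_Ec[OF sp j'])
  show "E (d - j) * M = th (d - j) \<cdot>\<^sub>m E (d - j)" by (rule sp_EM[OF sp j'])
  show "M * E (d - j) = th (d - j) \<cdot>\<^sub>m E (d - j)" by (rule sp_ME[OF sp j'])
  show "\<exists>x\<in>carrier_vec (Suc d). x \<noteq> 0\<^sub>v (Suc d) \<and> E (d - j) *\<^sub>v x = x \<and>
        (\<forall>w\<in>carrier_vec (Suc d). \<exists>c. E (d - j) *\<^sub>v w = c \<cdot>\<^sub>v x)" by (rule sp_rank[OF sp j'])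
  fix i assume i: "i \<le> d"
  show "E (d - i) * E (d - j) = (if i = j then E (d - j) else 0\<^sub>m (Suc d) (Suc d))"
    using sp_EE[OF sp, of "d - i" "d - j"] i j by auto
next
  fix w :: "'a vec" assume w: "w \<in> carrier_vec (Suc d)"
  have "lcomb d (\<lambda>j. E (d - j) *\<^sub>v w) (\<lambda>_. 1) = lcomb d (\<lambda>j. E j *\<^sub>v w) (\<lambda>_. 1)"
    using lcomb_rev2[of d "\<lambda>j. E j *\<^sub>v w" "\<lambda>_. 1"] by simp
  thus "w = lcomb d (\<lambda>j. E (d - j) *\<^sub>v w) (\<lambda>_. 1)" using sp_sum[OF sp w] by simp
qed


lemma smult_nz_vec:
  assumes "(z :: 'a :: field vec) \<in> carrier_vec n" "c \<noteq> 0" "z \<noteq> 0\<^sub>v n"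
  shows "c \<cdot>\<^sub>v z \<noteq> 0\<^sub>v n"
  using smult_vec_zero_iff[OF assms(1), of c] assms by auto

lemma tri_down:
  fixes G :: "nat \<Rightarrow> 'a :: field mat"
  assumes uc0: "\<And>k. k \<le> d \<Longrightarrow> u k \<in> carrier_vec (Suc d)" and Gc: "\<And>l. l \<le> d \<Longrightarrow> G l \<in> carrier_mat (Suc d) (Suc d)"
    and Gz: "\<And>l k. l \<le> d \<Longrightarrow> k < l \<Longrightarrow> G l *\<^sub>v u k = 0\<^sub>v (Suc d)"
    and Gnz: "\<And>k. k \<le> d \<Longrightarrow> G k *\<^sub>v u k \<noteq> 0\<^sub>v (Suc d)"
    and hw: "\<And>l. m \<le> l \<Longrightarrow> l \<le> d \<Longrightarrow> G l *\<^sub>v lcomb d u c = 0\<^sub>v (Suc d)"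
  shows "m \<le> k \<Longrightarrow> k \<le> d \<Longrightarrow> c k = 0"
proof (induction "d - k" arbitrary: k rule: less_induct)
  case less
  have uc: "\<And>k. k \<le> d \<Longrightarrow> u k \<in> carrier_vec (Suc d)" by (rule uc0)
  have "G k *\<^sub>v lcomb d u c = lcomb d (\<lambda>k'. G k *\<^sub>v u k') c"
    by (rule lcomb_mult[OF Gc[OF less(3)] uc])
  also have "\<dots> = c k \<cdot>\<^sub>v (G k *\<^sub>v u k)"
  proof (rule lcomb_single[OF less(3)])
    show "G k *\<^sub>v u k \<in> carrier_vec (Suc d)" using Gc[OF less(3)] uc[OF less(3)] by simp
    fix k' assume k': "k' \<le> d" "k' \<noteq> k"
    show "c k' = 0 \<or> G k *\<^sub>v u k' = 0\<^sub>v (Suc d)"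
    proof (cases "k' < k")
      case True thus ?thesis using Gz[OF less(3)] by simp
    next
      case False
      hence "d - k' < d - k" "m \<le> k'" using k' less(2,3) by auto
      thus ?thesis using less(1)[of k'] k' by auto
    qed
  qed
  finally have "c k \<cdot>\<^sub>v (G k *\<^sub>v u k) = 0\<^sub>v (Suc d)" using hw[OF less(2,3)] by simp
  thus "c k = 0" using smult_nz_vec[of "G k *\<^sub>v u k" "Suc d" "c k"] Gnz[OF less(3)]
      Gc[OF less(3)] uc[OF less(3)] by auto
qed

lemma tri_up:
  fixes G :: "nat \<Rightarrow> 'a :: field mat"
  assumes uc0: "\<And>k. k \<le> d \<Longrightarrow> u k \<in> carrier_vec (Suc d)" and Gc: "\<And>l. l \<le> d \<Longrightarrow> G l \<in> carrier_mat (Suc d) (Suc d)"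
    and Gz: "\<And>l k. k \<le> d \<Longrightarrow> l < k \<Longrightarrow> G l *\<^sub>v u k = 0\<^sub>v (Suc d)"
    and Gnz: "\<And>k. k \<le> d \<Longrightarrow> G k *\<^sub>v u k \<noteq> 0\<^sub>v (Suc d)"
    and hw: "\<And>l. l < m \<Longrightarrow> l \<le> d \<Longrightarrow> G l *\<^sub>v lcomb d u c = 0\<^sub>v (Suc d)"
  shows "k < m \<Longrightarrow> k \<le> d \<Longrightarrow> c k = 0"
proof (induction k rule: less_induct)
  case (less k)
  have uc: "\<And>k. k \<le> d \<Longrightarrow> u k \<in> carrier_vec (Suc d)" by (rule uc0)
  have "G k *\<^sub>v lcomb d u c = lcomb d (\<lambda>k'. G k *\<^sub>v u k') c"
    by (rule lcomb_mult[OF Gc[OF less(3)] uc])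
  also have "\<dots> = c k \<cdot>\<^sub>v (G k *\<^sub>v u k)"
  proof (rule lcomb_single[OF less(3)])
    show "G k *\<^sub>v u k \<in> carrier_vec (Suc d)" using Gc[OF less(3)] uc[OF less(3)] by simp
    fix k' assume k': "k' \<le> d" "k' \<noteq> k"
    show "c k' = 0 \<or> G k *\<^sub>v u k' = 0\<^sub>v (Suc d)"
    proof (cases "k < k'")
      case True thus ?thesis using Gz[OF k'(1)] by simp
    next
      case False
      hence "k' < k" using k' by auto
      thus ?thesis using less(1)[of k'] k' less(2) by auto
    qed
  qed
  finally have "c k \<cdot>\<^sub>v (G k *\<^sub>v u k) = 0\<^sub>v (Suc d)" using hw[OF less(2,3)] by simp
  thus "c k = 0" using smult_nz_vec[of "G k *\<^sub>v u k" "Suc d" "c k"] Gnz[OF less(3)]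
      Gc[OF less(3)] uc[OF less(3)] by auto
qed


lemma mat3_vec:
  assumes "A \<in> carrier_mat n n" "B \<in> carrier_mat n n" "C \<in> carrier_mat n n" "w \<in> carrier_vec n"
  shows "(A * B * C) *\<^sub>v w = A *\<^sub>v (B *\<^sub>v (C *\<^sub>v w))"
  using assms by (simp add: assoc_mult_mat_vec[of _ n n _ n])

lemma I2:
  fixes M N :: "'a :: field mat"
  assumes sp: "spectral d M th E" and N: "N \<in> carrier_mat (Suc d) (Suc d)" and b: "is_basis d u"
    and low: "\<And>k. 1 \<le> k \<Longrightarrow> k \<le> d \<Longrightarrow> (M - th k \<cdot>\<^sub>m 1\<^sub>m (Suc d)) *\<^sub>v u k = \<beta> k \<cdot>\<^sub>v u (k - 1)"
    and lownz: "\<And>k. 1 \<le> k \<Longrightarrow> k \<le> d \<Longrightarrow> \<beta> k \<noteq> 0"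
    and low0: "(M - th 0 \<cdot>\<^sub>m 1\<^sub>m (Suc d)) *\<^sub>v u 0 = 0\<^sub>v (Suc d)"
    and up: "\<And>k. k < d \<Longrightarrow> N *\<^sub>v u k = \<phi> k \<cdot>\<^sub>v u k + \<alpha> k \<cdot>\<^sub>v u (Suc k)"
    and upnz: "\<And>k. k < d \<Longrightarrow> \<alpha> k \<noteq> 0"
  shows I2a: "i \<le> d \<Longrightarrow> j \<le> d \<Longrightarrow> Suc j < i \<Longrightarrow> E i * N * E j = 0\<^sub>m (Suc d) (Suc d)"
    and I2b: "i \<le> d \<Longrightarrow> Suc j = i \<Longrightarrow> E i * N * E j \<noteq> 0\<^sub>m (Suc d) (Suc d)"
proof -
  let ?n = "Suc d"
  have uc: "\<And>k. k \<le> d \<Longrightarrow> u k \<in> carrier_vec ?n" by (rule basis_carrier[OF b])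
  have Ec: "\<And>l. l \<le> d \<Longrightarrow> E l \<in> carrier_mat ?n ?n" by (rule sp_Ec[OF sp])
  have Euc: "\<And>l k. l \<le> d \<Longrightarrow> k \<le> d \<Longrightarrow> E l *\<^sub>v u k \<in> carrier_vec ?n" using mult_mat_vec_carrier[OF Ec uc] by blast
  have rel: "\<beta> k \<cdot>\<^sub>v (E l *\<^sub>v u (k - 1)) = (th l - th k) \<cdot>\<^sub>v (E l *\<^sub>v u k)"
    if k: "1 \<le> k" "k \<le> d" and l: "l \<le> d" for k l
  proof -
    have "\<beta> k \<cdot>\<^sub>v (E l *\<^sub>v u (k - 1)) = E l *\<^sub>v (\<beta> k \<cdot>\<^sub>v u (k - 1))"
      using mult_mat_vec[OF Ec[OF l] uc[of "k - 1"]] k by simp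
    also have "\<dots> = E l *\<^sub>v ((M - th k \<cdot>\<^sub>m 1\<^sub>m ?n) *\<^sub>v u k)" using low[OF k] by simp
    also have "\<dots> = (th l - th k) \<cdot>\<^sub>v (E l *\<^sub>v u k)" by (rule sp_Eminus[OF sp l uc[OF k(2)]])
    finally show ?thesis .
  qed
  have Ez: "E l *\<^sub>v u k = 0\<^sub>v ?n" if "k \<le> d" "l \<le> d" "k < l" for k l
    using that
  proof (induction k)
    case 0
    have "(th l - th 0) \<cdot>\<^sub>v (E l *\<^sub>v u 0) = E l *\<^sub>v 0\<^sub>v ?n"
      using sp_Eminus[OF sp 0(2) uc[of 0], of "th 0"] low0 by simp
    also have "\<dots> = 0\<^sub>v ?n" using Ec[OF 0(2)] by simp
    finally show ?case using smult_nz_vec[OF Euc[OF 0(2), of 0], of "th l - th 0"]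
        sp_th[OF sp 0(2), of 0] 0 by auto
  next
    case (Suc k)
    have ih: "E l *\<^sub>v u k = 0\<^sub>v ?n" using Suc.IH Suc.prems by simp
    have r: "\<beta> (Suc k) \<cdot>\<^sub>v (E l *\<^sub>v u k) = (th l - th (Suc k)) \<cdot>\<^sub>v (E l *\<^sub>v u (Suc k))"
      using rel[of "Suc k" l] Suc.prems by simp
    have "(th l - th (Suc k)) \<cdot>\<^sub>v (E l *\<^sub>v u (Suc k)) = 0\<^sub>v ?n"
      using r unfolding ih by (metis smult_zero_vec')
    then show ?case using smult_nz_vec[OF Euc[OF Suc(3,2)], of "th l - th (Suc k)"]
        sp_th[OF sp Suc(3,2)] Suc by auto
  qed
  have Enz: "E k *\<^sub>v u k \<noteq> 0\<^sub>v ?n" if k: "k \<le> d" for k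
  proof
    assume z: "E k *\<^sub>v u k = 0\<^sub>v ?n"
    have zm: "E k *\<^sub>v u (k + m) = 0\<^sub>v ?n" if "k + m \<le> d" for m
      using that
    proof (induction m)
      case 0 thus ?case using z by simp
    next
      case (Suc m)
      have ih: "E k *\<^sub>v u (k + m) = 0\<^sub>v ?n" using Suc.IH Suc.prems by simp
      have r: "\<beta> (k + Suc m) \<cdot>\<^sub>v (E k *\<^sub>v u (k + m)) = (th k - th (k + Suc m)) \<cdot>\<^sub>v (E k *\<^sub>v u (k + Suc m))"
        using rel[of "k + Suc m" k] Suc.prems k by simp
      have "(th k - th (k + Suc m)) \<cdot>\<^sub>v (E k *\<^sub>v u (k + Suc m)) = 0\<^sub>v ?n"
        using r unfolding ih by (metis smult_zero_vec')
      then show ?case using smult_nz_vec[OF Euc[OF k Suc(2)], of "th k - th (k + Suc m)"]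
          sp_th[OF sp k Suc(2)] by auto
    qed
    have "E k *\<^sub>v u k' = 0\<^sub>v ?n" if k': "k' \<le> d" for k'
    proof (cases "k' < k")
      case True thus ?thesis using Ez[OF k' k] by simp
    next
      case False
      then obtain m where "k' = k + m" by (metis le_add_diff_inverse not_less)
      thus ?thesis using zm k' by simp
    qed
    thus False using sp_basis_nz[OF sp b k] by blast
  qed
  have EN: "E i *\<^sub>v (N *\<^sub>v u k) = 0\<^sub>v ?n" if "i \<le> d" "Suc k < i" for i k
  proof -
    have k: "k < d" using that by simp
    have "E i *\<^sub>v (N *\<^sub>v u k) = E i *\<^sub>v (\<phi> k \<cdot>\<^sub>v u k) + E i *\<^sub>v (\<alpha> k \<cdot>\<^sub>v u (Suc k))"
      unfolding up[OF k] using Ec[OF that(1)] uc k by (intro mult_add_distrib_mat_vec) auto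
    also have "\<dots> = \<phi> k \<cdot>\<^sub>v (E i *\<^sub>v u k) + \<alpha> k \<cdot>\<^sub>v (E i *\<^sub>v u (Suc k))"
      using mult_mat_vec[OF Ec[OF that(1)] uc] k by simp
    also have "\<dots> = 0\<^sub>v ?n" using Ez[of k i] Ez[of "Suc k" i] that k by simp
    finally show ?thesis .
  qed
  have ENd: "E (Suc k) *\<^sub>v (N *\<^sub>v u k) = \<alpha> k \<cdot>\<^sub>v (E (Suc k) *\<^sub>v u (Suc k))" if k: "k < d" for k
  proof -
    have "E (Suc k) *\<^sub>v (N *\<^sub>v u k) = E (Suc k) *\<^sub>v (\<phi> k \<cdot>\<^sub>v u k) + E (Suc k) *\<^sub>v (\<alpha> k \<cdot>\<^sub>v u (Suc k))"
      unfolding up[OF k] using Ec[of "Suc k"] uc k by (intro mult_add_distrib_mat_vec) auto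
    also have "\<dots> = \<phi> k \<cdot>\<^sub>v (E (Suc k) *\<^sub>v u k) + \<alpha> k \<cdot>\<^sub>v (E (Suc k) *\<^sub>v u (Suc k))"
      using mult_mat_vec[OF Ec[of "Suc k"] uc] k by simp
    also have "\<dots> = \<alpha> k \<cdot>\<^sub>v (E (Suc k) *\<^sub>v u (Suc k))"
      using Ez[of k "Suc k"] k Euc[of "Suc k" "Suc k"] by simp
    finally show ?thesis .
  qed
  have coef: "c k = 0" if j: "j \<le> d" and z: "z = lcomb d u c"
      and zE: "\<And>l. l \<le> d \<Longrightarrow> l \<noteq> j \<Longrightarrow> E l *\<^sub>v z = 0\<^sub>v ?n" and k: "j < k" "k \<le> d" for j z c k
    by (rule tri_down[OF uc Ec Ez Enz, where m="Suc j" and c=c]) (use zE z k in auto)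
  have Ejw: "E l *\<^sub>v (E j *\<^sub>v w) = 0\<^sub>v ?n"
    if "l \<le> d" "j \<le> d" "l \<noteq> j" "w \<in> carrier_vec ?n" for l j w
  proof -
    have "E l *\<^sub>v (E j *\<^sub>v w) = (E l * E j) *\<^sub>v w"
      using assoc_mult_mat_vec[OF Ec Ec that(4)] that by simp
    thus ?thesis using sp_EE[OF sp that(1,2)] that by simp
  qed
  {
    assume i: "i \<le> d" and j: "j \<le> d" and ij: "Suc j < i"
    show "E i * N * E j = 0\<^sub>m ?n ?n"
    proof (rule mat_eq_vecs)
      show "E i * N * E j \<in> carrier_mat ?n ?n" using Ec[OF i] N Ec[OF j] by simp
      show "0\<^sub>m ?n ?n \<in> carrier_mat ?n ?n" by simp
      fix w :: "'a vec" assume w: "w \<in> carrier_vec ?n"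
      obtain c where zc: "E j *\<^sub>v w = lcomb d u c" using basis_span[OF b] Ec[OF j] w by fastforce
      have c0: "c k = 0" if "j < k" "k \<le> d" for k
        by (rule coef[OF j zc]) (use Ejw j w that in auto)
      have "(E i * N * E j) *\<^sub>v w = (E i * N) *\<^sub>v lcomb d u c"
        using Ec[OF i] N Ec[OF j] w zc by (simp add: assoc_mult_mat_vec[of _ ?n ?n _ ?n])
      also have "\<dots> = lcomb d (\<lambda>k. (E i * N) *\<^sub>v u k) c"
        by (rule lcomb_mult[OF _ uc]) (use Ec[OF i] N in simp)
      also have "\<dots> = 0\<^sub>v ?n"
      proof (rule lcomb_zero)
        fix k assume k: "k \<le> d"
        show "c k = 0 \<or> (E i * N) *\<^sub>v u k = 0\<^sub>v ?n"
        proof (cases "j < k")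
          case True thus ?thesis using c0 k by simp
        next
          case False
          hence "Suc k < i" using ij by simp
          thus ?thesis using EN[OF i] assoc_mult_mat_vec[OF Ec[OF i] N uc[OF k]] by simp
        qed
      qed
      finally show "(E i * N * E j) *\<^sub>v w = 0\<^sub>m ?n ?n *\<^sub>v w" using w by simp
    qed
  }
  {
    assume i: "i \<le> d" and ij: "Suc j = i"
    have j: "j \<le> d" "j < d" using i ij by auto
    let ?z = "E j *\<^sub>v u j"
    have zc': "?z \<in> carrier_vec ?n" using Euc j by simp
    have znz: "?z \<noteq> 0\<^sub>v ?n" using Enz j by simp
    obtain c where zc: "?z = lcomb d u c" using basis_span[OF b zc'] by blast
    have c0: "c k = 0" if "j < k" "k \<le> d" for k
      by (rule coef[OF j(1) zc]) (use Ejw j uc that in auto)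
    have "?z = E j *\<^sub>v ?z"
      using assoc_mult_mat_vec[OF Ec Ec uc, of j j j] sp_EE[OF sp j(1) j(1)] j by simp
    also have "\<dots> = lcomb d (\<lambda>k. E j *\<^sub>v u k) c" unfolding zc[symmetric, THEN sym]
      by (rule lcomb_mult[OF Ec[OF j(1)] uc])
    also have "\<dots> = c j \<cdot>\<^sub>v ?z"
    proof (rule lcomb_single[OF j(1)])
      show "E j *\<^sub>v u j \<in> carrier_vec ?n" using zc' .
      fix k assume k: "k \<le> d" "k \<noteq> j"
      show "c k = 0 \<or> E j *\<^sub>v u k = 0\<^sub>v ?n"
        using c0[of k] Ez[of k j] k j by (cases "j < k") auto
    qed
    finally have "?z = c j \<cdot>\<^sub>v ?z" .
    hence cj: "c j \<noteq> 0" using znz zc' smult_vec_zero_iff[OF zc', of 0] by auto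
    show "E i * N * E j \<noteq> 0\<^sub>m ?n ?n"
    proof
      assume h: "E i * N * E j = 0\<^sub>m ?n ?n"
      have "(E i * N) *\<^sub>v ?z = (E i * N * E j) *\<^sub>v u j"
        using Ec[OF i] N Ec[OF j(1)] uc[OF j(1)] by (simp add: assoc_mult_mat_vec[of _ ?n ?n _ ?n])
      also have "\<dots> = 0\<^sub>v ?n" unfolding h using uc[OF j(1)] by simp
      finally have z0: "(E i * N) *\<^sub>v ?z = 0\<^sub>v ?n" .
      have "(E i * N) *\<^sub>v ?z = lcomb d (\<lambda>k. (E i * N) *\<^sub>v u k) c"
        unfolding zc by (rule lcomb_mult[OF _ uc]) (use Ec[OF i] N in simp)
      also have "\<dots> = c j \<cdot>\<^sub>v ((E i * N) *\<^sub>v u j)"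
      proof (rule lcomb_single[OF j(1)])
        show "(E i * N) *\<^sub>v u j \<in> carrier_vec ?n" using Ec[OF i] N uc[OF j(1)] by simp
        fix k assume k: "k \<le> d" "k \<noteq> j"
        show "c k = 0 \<or> (E i * N) *\<^sub>v u k = 0\<^sub>v ?n"
        proof (cases "j < k")
          case True thus ?thesis using c0 k by simp
        next
          case False
          hence "Suc k < i" using ij k by simp
          thus ?thesis using EN[OF i] assoc_mult_mat_vec[OF Ec[OF i] N uc[OF k(1)]] by simp
        qed
      qed
      also have "(E i * N) *\<^sub>v u j = \<alpha> j \<cdot>\<^sub>v (E (Suc j) *\<^sub>v u (Suc j))"
        using assoc_mult_mat_vec[OF Ec[OF i] N uc[OF j(1)]] ENd[OF j(2)] ij by simp
      finally have "(E i * N) *\<^sub>v ?z = c j \<cdot>\<^sub>v (\<alpha> j \<cdot>\<^sub>v (E (Suc j) *\<^sub>v u (Suc j)))" .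
      moreover have "c j \<cdot>\<^sub>v (\<alpha> j \<cdot>\<^sub>v (E (Suc j) *\<^sub>v u (Suc j))) \<noteq> 0\<^sub>v ?n"
      proof -
        have e: "E (Suc j) *\<^sub>v u (Suc j) \<in> carrier_vec ?n" "E (Suc j) *\<^sub>v u (Suc j) \<noteq> 0\<^sub>v ?n"
          using Euc[of "Suc j" "Suc j"] Enz[of "Suc j"] j by auto
        have "\<alpha> j \<cdot>\<^sub>v (E (Suc j) *\<^sub>v u (Suc j)) \<noteq> 0\<^sub>v ?n"
          by (rule smult_nz_vec[OF e(1) upnz[OF j(2)] e(2)])
        thus ?thesis using smult_nz_vec[OF _ cj] e(1) by simp
      qed
      ultimately show False using z0 by simp
    qed
  }
qed


primrec useq :: "nat \<Rightarrow> 'a::field mat \<Rightarrow> (nat \<Rightarrow> 'a) \<Rightarrow> 'a vec \<Rightarrow> nat \<Rightarrow> 'a vec" where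
  "useq n A th v 0 = v"
| "useq n A th v (Suc k) = (A - th k \<cdot>\<^sub>m 1\<^sub>m n) *\<^sub>v useq n A th v k"

lemma finsum_vec_lcomb:
  assumes u: "\<And>k. k \<le> d \<Longrightarrow> u k \<in> carrier_vec (Suc d)"
  shows "finsum_vec TYPE('a::field) (Suc d) (\<lambda>i. c i \<cdot>\<^sub>v u i) {..d} = lcomb d u c"
proof (rule eq_vecI)
  have Pi: "(\<lambda>i. c i \<cdot>\<^sub>v u i) \<in> {..d} \<rightarrow> carrier_vec (Suc d)" using u by auto
  have fc: "finsum_vec TYPE('a) (Suc d) (\<lambda>i. c i \<cdot>\<^sub>v u i) {..d} \<in> carrier_vec (Suc d)"
    by (rule finsum_vec_closed[OF Pi])
  thus "dim_vec (finsum_vec TYPE('a) (Suc d) (\<lambda>i. c i \<cdot>\<^sub>v u i) {..d}) = dim_vec (lcomb d u c)"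
    by (simp add: lcomb_def)
  fix r assume "r < dim_vec (lcomb d u c)"
  hence r: "r < Suc d" by (simp add: lcomb_def)
  have "finsum_vec TYPE('a) (Suc d) (\<lambda>i. c i \<cdot>\<^sub>v u i) {..d} $ r = (\<Sum>i\<le>d. (c i \<cdot>\<^sub>v u i) $ r)"
    by (rule index_finsum_vec[OF _ r Pi]) simp
  also have "\<dots> = (\<Sum>i\<le>d. c i * u i $ r)"
  proof (intro sum.cong refl)
    fix i assume "i \<in> {..d}"
    hence "u i \<in> carrier_vec (Suc d)" using u by auto
    thus "(c i \<cdot>\<^sub>v u i) $ r = c i * u i $ r" using r by simp
  qed
  finally show "finsum_vec TYPE('a) (Suc d) (\<lambda>i. c i \<cdot>\<^sub>v u i) {..d} $ r = lcomb d u c $ r"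
    using r by (simp add: lcomb_def)
qed

lemma image_line:
  assumes B: "(B :: 'a :: field mat) \<in> carrier_mat n n" and x: "x \<in> carrier_vec n" and y: "y \<in> carrier_vec n"
    and Bx: "B *\<^sub>v x = \<beta> \<cdot>\<^sub>v y" and b: "\<beta> \<noteq> 0"
  shows "(\<lambda>z. B *\<^sub>v z) ` {c \<cdot>\<^sub>v x | c. True} = {c \<cdot>\<^sub>v y | c. True}"
proof
  have e: "B *\<^sub>v (c \<cdot>\<^sub>v x) = (c * \<beta>) \<cdot>\<^sub>v y" for c
    unfolding mult_mat_vec[OF B x] Bx by (simp add: smult_smult_assoc)
  show "(\<lambda>z. B *\<^sub>v z) ` {c \<cdot>\<^sub>v x | c. True} \<subseteq> {c \<cdot>\<^sub>v y | c. True}"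
    using e by auto
  show "{c \<cdot>\<^sub>v y | c. True} \<subseteq> (\<lambda>z. B *\<^sub>v z) ` {c \<cdot>\<^sub>v x | c. True}"
  proof
    fix z assume "z \<in> {c \<cdot>\<^sub>v y | c. True}"
    then obtain c where z: "z = c \<cdot>\<^sub>v y" by blast
    have "z = B *\<^sub>v ((c / \<beta>) \<cdot>\<^sub>v x)" unfolding z e using b by simp
    thus "z \<in> (\<lambda>z. B *\<^sub>v z) ` {c \<cdot>\<^sub>v x | c. True}" by blast
  qed
qed

lemma image_line0:
  assumes B: "(B :: 'a :: field mat) \<in> carrier_mat n n" and x: "x \<in> carrier_vec n"
    and Bx: "B *\<^sub>v x = 0\<^sub>v n"
  shows "(\<lambda>z. B *\<^sub>v z) ` {c \<cdot>\<^sub>v x | c. True} = {0\<^sub>v n}"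
proof -
  have e: "B *\<^sub>v (c \<cdot>\<^sub>v x) = 0\<^sub>v n" for c
    unfolding mult_mat_vec[OF B x] Bx by simp
  have "x = 1 \<cdot>\<^sub>v x" by simp
  hence xin: "x \<in> {c \<cdot>\<^sub>v x | c. True}" by blast
  have "0\<^sub>v n \<in> (\<lambda>z. B *\<^sub>v z) ` {c \<cdot>\<^sub>v x | c. True}"
    by (rule image_eqI[where x=x]) (use Bx xin in auto)
  thus ?thesis using e by auto
qed

lemma II:
  fixes A As :: "'a :: field mat"
  assumes spA: "spectral d A th E" and spS: "spectral d As ths F"
    and cF0: "\<And>i j. i \<le> d \<Longrightarrow> j \<le> d \<Longrightarrow> Suc j < i \<Longrightarrow> F i * A * F j = 0\<^sub>m (Suc d) (Suc d)"
    and cF1: "\<And>j. Suc j \<le> d \<Longrightarrow> F (Suc j) * A * F j \<noteq> 0\<^sub>m (Suc d) (Suc d)"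
    and cE0: "\<And>i j. i \<le> d \<Longrightarrow> j \<le> d \<Longrightarrow> Suc i < j \<Longrightarrow> E i * As * E j = 0\<^sub>m (Suc d) (Suc d)"
    and cE1: "\<And>i. Suc i \<le> d \<Longrightarrow> E i * As * E (Suc i) \<noteq> 0\<^sub>m (Suc d) (Suc d)"
  shows "\<exists>U. split_decomposition d A th As ths U"
proof -
  let ?n = "Suc d"
  have Ac: "A \<in> carrier_mat ?n ?n" by (rule sp_M[OF spA])
  have Sc: "As \<in> carrier_mat ?n ?n" by (rule sp_M[OF spS])
  have Ec: "\<And>l. l \<le> d \<Longrightarrow> E l \<in> carrier_mat ?n ?n" by (rule sp_Ec[OF spA])
  have Fc: "\<And>l. l \<le> d \<Longrightarrow> F l \<in> carrier_mat ?n ?n" by (rule sp_Ec[OF spS])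
  obtain v where v: "v \<in> carrier_vec ?n" "v \<noteq> 0\<^sub>v ?n" "F 0 *\<^sub>v v = v"
    using sp_rank[OF spS, of 0] by blast
  have Sv: "As *\<^sub>v v = ths 0 \<cdot>\<^sub>v v"
  proof -
    have "As *\<^sub>v v = As *\<^sub>v (F 0 *\<^sub>v v)" using v by simp
    also have "\<dots> = (As * F 0) *\<^sub>v v" using assoc_mult_mat_vec[OF Sc Fc v(1), of 0] by simp
    also have "\<dots> = ths 0 \<cdot>\<^sub>v (F 0 *\<^sub>v v)" unfolding sp_ME[OF spS, of 0, simplified]
      by (rule smult_mat_vec[OF Fc v(1)]) simp
    finally show ?thesis using v by simp
  qed
  define u where "u = useq ?n A th v"
  have uc: "u k \<in> carrier_vec ?n" for k
    by (induction k) (use v Ac in \<open>auto simp: u_def intro!: mult_mat_vec_carrier[of _ ?n ?n]\<close>)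
  have uS: "u (Suc k) = (A - th k \<cdot>\<^sub>m 1\<^sub>m ?n) *\<^sub>v u k" for k by (simp add: u_def)
  have u0: "u 0 = v" by (simp add: u_def)
  have K: "(\<forall>l\<le>d. k < l \<longrightarrow> F l *\<^sub>v u k = 0\<^sub>v ?n) \<and> F k *\<^sub>v u k \<noteq> 0\<^sub>v ?n" if "k \<le> d" for k
    using that
  proof (induction k)
    case 0
    have "F l *\<^sub>v u 0 = 0\<^sub>v ?n" if "l \<le> d" "0 < l" for l
      unfolding u0 by (rule sp_eig[OF spS v(1) Sv that(1)]) (use that in auto)
    thus ?case using u0 v by auto
  next
    case (Suc k)
    have k: "k \<le> d" "k < d" using Suc.prems by auto
    note IH = Suc.IH[OF k(1)]
    have FAc: "\<And>l. l \<le> d \<Longrightarrow> F l * A \<in> carrier_mat ?n ?n" using mult_carrier_mat[OF Fc Ac] by blast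
    have Fu: "F l *\<^sub>v u (Suc k) = (F l * A) *\<^sub>v u k - th k \<cdot>\<^sub>v (F l *\<^sub>v u k)" if l: "l \<le> d" for l
    proof -
      have "F l *\<^sub>v u (Suc k) = F l *\<^sub>v (A *\<^sub>v u k - th k \<cdot>\<^sub>v u k)"
        unfolding uS minus_smult_one_vec[OF Ac uc] ..
      also have "\<dots> = F l *\<^sub>v (A *\<^sub>v u k) - F l *\<^sub>v (th k \<cdot>\<^sub>v u k)"
        using Fc[OF l] Ac uc by (intro mult_minus_distrib_mat_vec) auto
      also have "\<dots> = (F l * A) *\<^sub>v u k - th k \<cdot>\<^sub>v (F l *\<^sub>v u k)"
        unfolding mult_mat_vec[OF Fc[OF l] uc] assoc_mult_mat_vec[OF Fc[OF l] Ac uc] ..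
      finally show ?thesis .
    qed
    have FAz: "(F l * A) *\<^sub>v (F j *\<^sub>v u k) = 0\<^sub>v ?n" if "l \<le> d" "j \<le> d" "j \<noteq> k" "Suc k \<le> l" for l j
    proof (cases "k < j")
      case True thus ?thesis using IH that FAc[OF that(1)] by simp
    next
      case False
      hence "Suc j < l" using that by simp
      hence "F l * A * F j = 0\<^sub>m ?n ?n" using cF0 that by simp
      moreover have "(F l * A) *\<^sub>v (F j *\<^sub>v u k) = (F l * A * F j) *\<^sub>v u k"
        using assoc_mult_mat_vec[OF FAc[OF that(1)] Fc[OF that(2)] uc] by simp
      ultimately show ?thesis using uc by simp
    qed
    have A1: "F l *\<^sub>v u (Suc k) = 0\<^sub>v ?n" if l: "l \<le> d" "Suc k < l" for l
    proof -
      have "(F l * A) *\<^sub>v u k = 0\<^sub>v ?n"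
      proof (rule sp_lin_zero[OF spS FAc[OF l(1)] uc])
        fix j assume j: "j \<le> d"
        show "(F l * A) *\<^sub>v (F j *\<^sub>v u k) = 0\<^sub>v ?n"
        proof (cases "j = k")
          case True
          hence "Suc j < l" using l by simp
          hence "F l * A * F j = 0\<^sub>m ?n ?n" using cF0 l j by simp
          moreover have "(F l * A) *\<^sub>v (F j *\<^sub>v u k) = (F l * A * F j) *\<^sub>v u k"
            using assoc_mult_mat_vec[OF FAc[OF l(1)] Fc[OF j] uc] by simp
          ultimately show ?thesis using uc by simp
        qed (use FAz l j in auto)
      qed
      thus ?thesis unfolding Fu[OF l(1)] using IH l by simp
    qed
    have A2: "F (Suc k) *\<^sub>v u (Suc k) \<noteq> 0\<^sub>v ?n"
    proof -
      have "(F (Suc k) * A) *\<^sub>v u k = (F (Suc k) * A) *\<^sub>v (F k *\<^sub>v u k)"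
        by (rule sp_lin_single[OF spS FAc[OF Suc.prems] uc k(1)]) (use FAz Suc.prems in auto)
      moreover have "(F (Suc k) * A) *\<^sub>v (F k *\<^sub>v u k) \<noteq> 0\<^sub>v ?n"
        by (rule sp_rank1[OF spS FAc[OF Suc.prems] k(1) cF1[OF Suc.prems] uc]) (use IH in simp)
      moreover have "(F (Suc k) * A) *\<^sub>v (F k *\<^sub>v u k) \<in> carrier_vec ?n"
        using mult_mat_vec_carrier[OF FAc[OF Suc.prems] mult_mat_vec_carrier[OF Fc[OF k(1)] uc]] .
      ultimately show ?thesis unfolding Fu[OF Suc.prems] using IH Suc.prems by simp
    qed
    show ?case using A1 A2 by auto
  qed
  have Fz: "\<And>l k. l \<le> d \<Longrightarrow> k < l \<Longrightarrow> F l *\<^sub>v u k = 0\<^sub>v ?n" using K by auto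
  have Fnz: "\<And>k. k \<le> d \<Longrightarrow> F k *\<^sub>v u k \<noteq> 0\<^sub>v ?n" using K by auto
  have uc': "\<And>k. k \<le> d \<Longrightarrow> u k \<in> carrier_vec ?n" using uc by simp
  have b: "is_basis d u"
  proof (rule indep_basis[OF uc'])
    fix c assume h: "lcomb d u c = 0\<^sub>v ?n"
    have hw: "\<And>l. 0 \<le> l \<Longrightarrow> l \<le> d \<Longrightarrow> F l *\<^sub>v lcomb d u c = 0\<^sub>v ?n" using h Fc by simp
    show "\<forall>k\<le>d. c k = 0"
    proof (intro allI impI)
      fix k assume "k \<le> d"
      thus "c k = 0" using tri_down[OF uc' Fc Fz Fnz, where m=0 and c=c and k=k] hw by simp
    qed
  qed
  have relE: "E l *\<^sub>v u (Suc k) = (th l - th k) \<cdot>\<^sub>v (E l *\<^sub>v u k)" if "l \<le> d" for l k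
    unfolding uS by (rule sp_Eminus[OF spA that uc])
  have Euc: "\<And>l k. l \<le> d \<Longrightarrow> E l *\<^sub>v u k \<in> carrier_vec ?n" using mult_mat_vec_carrier[OF Ec uc] by blast
  have E1: "E l *\<^sub>v u k = 0\<^sub>v ?n" if "l \<le> d" "l < k" for l k
    using that
  proof (induction k)
    case (Suc k)
    show ?case
    proof (cases "l = k")
      case True thus ?thesis unfolding relE[OF Suc.prems(1)] using Euc[OF Suc.prems(1)]
          smult_vec_zero_iff[OF Euc[OF Suc.prems(1)], of 0] by simp
    next
      case False
      hence "E l *\<^sub>v u k = 0\<^sub>v ?n" using Suc by simp
      thus ?thesis unfolding relE[OF Suc.prems(1)] by simp
    qed
  qed simp
  have E2: "E l *\<^sub>v v \<noteq> 0\<^sub>v ?n" if l: "l \<le> d" for l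
  proof
    assume z: "E l *\<^sub>v v = 0\<^sub>v ?n"
    have "E l *\<^sub>v u k = 0\<^sub>v ?n" for k
      by (induction k) (use z u0 relE[OF l] in auto)
    thus False using sp_basis_nz[OF spA b l] by blast
  qed
  have E3: "E l *\<^sub>v u k \<noteq> 0\<^sub>v ?n" if "l \<le> d" "k \<le> l" for l k
    using that
  proof (induction k)
    case 0 thus ?case using E2 u0 by simp
  next
    case (Suc k)
    have "th l - th k \<noteq> 0" using sp_th[OF spA Suc.prems(1), of k] Suc.prems by simp
    thus ?case unfolding relE[OF Suc.prems(1)]
      using smult_nz_vec[OF Euc[OF Suc.prems(1)]] Suc by simp
  qed
  have Enz: "\<And>k. k \<le> d \<Longrightarrow> E k *\<^sub>v u k \<noteq> 0\<^sub>v ?n" using E3 by simp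
  have ud: "u (Suc d) = 0\<^sub>v ?n"
    by (rule sp_zero[OF spA uc]) (use E1 in auto)
  have lowS: "\<exists>\<beta>. \<beta> \<noteq> 0 \<and> (As - ths i \<cdot>\<^sub>m 1\<^sub>m ?n) *\<^sub>v u i = \<beta> \<cdot>\<^sub>v u (i - 1)"
    if i: "1 \<le> i" "i \<le> d" for i
  proof -
    define w where "w = (As - ths i \<cdot>\<^sub>m 1\<^sub>m ?n) *\<^sub>v u i"
    have w_eq: "w = As *\<^sub>v u i - ths i \<cdot>\<^sub>v u i" unfolding w_def by (rule minus_smult_one_vec[OF Sc uc])
    have wc: "w \<in> carrier_vec ?n" unfolding w_eq using Sc uc by simp
    have Fw: "F l *\<^sub>v w = 0\<^sub>v ?n" if "i \<le> l" "l \<le> d" for l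
    proof -
      have "F l *\<^sub>v w = (ths l - ths i) \<cdot>\<^sub>v (F l *\<^sub>v u i)" unfolding w_def by (rule sp_Eminus[OF spS that(2) uc])
      also have "\<dots> = 0\<^sub>v ?n"
      proof (cases "l = i")
        case True thus ?thesis using smult_vec_zero_iff[OF mult_mat_vec_carrier[OF Fc[OF that(2)] uc], of 0] by simp
      next
        case False thus ?thesis using Fz[OF that(2), of i] that by simp
      qed
      finally show ?thesis .
    qed
    have ESc: "\<And>l. l \<le> d \<Longrightarrow> E l * As \<in> carrier_mat ?n ?n" using mult_carrier_mat[OF Ec Sc] by blast
    have ESz: "(E l * As) *\<^sub>v (E j *\<^sub>v u i) = 0\<^sub>v ?n" if "l \<le> d" "j \<le> d" "j \<noteq> i" "l < i" for l j
    proof (cases "j < i")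
      case True thus ?thesis using E1[OF that(2) True] ESc[OF that(1)] by simp
    next
      case False
      hence "Suc l < j" using that by simp
      hence "E l * As * E j = 0\<^sub>m ?n ?n" using cE0 that by simp
      moreover have "(E l * As) *\<^sub>v (E j *\<^sub>v u i) = (E l * As * E j) *\<^sub>v u i"
        using assoc_mult_mat_vec[OF ESc[OF that(1)] Ec[OF that(2)] uc] by simp
      ultimately show ?thesis using uc by simp
    qed
    have Ew_split: "E l *\<^sub>v w = (E l * As) *\<^sub>v u i - ths i \<cdot>\<^sub>v (E l *\<^sub>v u i)" if l: "l \<le> d" for l
    proof -
      have "E l *\<^sub>v w = E l *\<^sub>v (As *\<^sub>v u i) - E l *\<^sub>v (ths i \<cdot>\<^sub>v u i)"
        unfolding w_eq using Ec[OF l] Sc uc by (intro mult_minus_distrib_mat_vec) auto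
      also have "\<dots> = (E l * As) *\<^sub>v u i - ths i \<cdot>\<^sub>v (E l *\<^sub>v u i)"
        unfolding mult_mat_vec[OF Ec[OF l] uc] assoc_mult_mat_vec[OF Ec[OF l] Sc uc] ..
      finally show ?thesis .
    qed
    have Ew: "E l *\<^sub>v w = 0\<^sub>v ?n" if l: "l < i - 1" "l \<le> d" for l
    proof -
      have l': "Suc l < i" using l by simp
      have "(E l * As) *\<^sub>v u i = 0\<^sub>v ?n"
      proof (rule sp_lin_zero[OF spA ESc[OF l(2)] uc])
        fix j assume j: "j \<le> d"
        show "(E l * As) *\<^sub>v (E j *\<^sub>v u i) = 0\<^sub>v ?n"
        proof (cases "j = i")
          case True
          hence "E l * As * E j = 0\<^sub>m ?n ?n" using cE0 l' j l by simp
          moreover have "(E l * As) *\<^sub>v (E j *\<^sub>v u i) = (E l * As * E j) *\<^sub>v u i"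
            using assoc_mult_mat_vec[OF ESc[OF l(2)] Ec[OF j] uc] by simp
          ultimately show ?thesis using uc by simp
        qed (use ESz l l' j in auto)
      qed
      thus ?thesis unfolding Ew_split[OF l(2)] using E1[OF l(2), of i] l' by simp
    qed
    obtain c where wl: "w = lcomb d u c" using basis_span[OF b wc] by blast
    have c_hi: "c k = 0" if "i \<le> k" "k \<le> d" for k
      by (rule tri_down[OF uc' Fc Fz Fnz, where m=i and c=c]) (use Fw wl that in auto)
    have c_lo: "c k = 0" if "k < i - 1" "k \<le> d" for k
      by (rule tri_up[OF uc' Ec _ Enz, where m="i - 1" and c=c]) (use Ew wl that E1 in auto)
    have w1: "w = c (i - 1) \<cdot>\<^sub>v u (i - 1)"
      unfolding wl
    proof (rule lcomb_single)
      show "i - 1 \<le> d" "u (i - 1) \<in> carrier_vec ?n" using i uc by auto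
      fix k assume "k \<le> d" "k \<noteq> i - 1"
      thus "c k = 0 \<or> u k = 0\<^sub>v ?n" using c_hi c_lo by (cases "k < i - 1") auto
    qed
    have "E (i - 1) *\<^sub>v w \<noteq> 0\<^sub>v ?n"
    proof -
      have i1: "i - 1 \<le> d" "Suc (i - 1) = i" using i by auto
      have "(E (i - 1) * As) *\<^sub>v u i = (E (i - 1) * As) *\<^sub>v (E i *\<^sub>v u i)"
        by (rule sp_lin_single[OF spA ESc[OF i1(1)] uc i(2)]) (use ESz[of "i - 1"] i1 i in auto)
      moreover have "(E (i - 1) * As) *\<^sub>v (E i *\<^sub>v u i) \<noteq> 0\<^sub>v ?n"
        by (rule sp_rank1[OF spA ESc[OF i1(1)] i(2) _ uc Enz[OF i(2)]]) (use cE1[of "i - 1"] i1 i in simp)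
      moreover have "(E (i - 1) * As) *\<^sub>v (E i *\<^sub>v u i) \<in> carrier_vec ?n"
        using mult_mat_vec_carrier[OF ESc[OF i1(1)] mult_mat_vec_carrier[OF Ec[OF i(2)] uc]] .
      ultimately show ?thesis unfolding Ew_split[OF i1(1)] using E1[OF i1(1), of i] i by simp
    qed
    hence "c (i - 1) \<noteq> 0" unfolding w1 using Ec[of "i - 1"] i uc[of "i - 1"]
      smult_vec_zero_iff[OF uc[of "i - 1"], of 0] by auto
    thus ?thesis using w1 unfolding w_def by blast
  qed
  define U where "U k = {c \<cdot>\<^sub>v u k | c. True}" for k
  have Sc1: "As - t \<cdot>\<^sub>m 1\<^sub>m ?n \<in> carrier_mat ?n ?n" for t
    by (intro minus_carrier_mat smult_carrier_mat one_carrier_mat)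
  have unz: "u k \<noteq> 0\<^sub>v ?n" if "k \<le> d" for k
    using Fnz[OF that] Fc[OF that] by auto
  have dec: "decomposition d U"
    unfolding decomposition_def
  proof (intro conjI allI impI ballI)
    fix i assume "i \<le> d"
    thus "one_dim_subspace ?n (U i)" unfolding one_dim_subspace_def U_def using uc unz by blast
  next
    fix w :: "'a vec" assume "w \<in> carrier_vec ?n"
    then obtain c where wc: "w = lcomb d u c" using basis_span[OF b] by blast
    show "\<exists>f. (\<forall>i\<le>d. f i \<in> U i) \<and> w = finsum_vec TYPE('a) ?n f {..d}"
      by (rule exI[of _ "\<lambda>i. c i \<cdot>\<^sub>v u i"]) (auto simp: U_def wc finsum_vec_lcomb[OF uc'])
  next
    fix f i assume h: "(\<forall>i\<le>d. f i \<in> U i) \<and> finsum_vec TYPE('a) ?n f {..d} = 0\<^sub>v ?n" and i: "i \<le> d"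
    define c where "c i = (SOME c. f i = c \<cdot>\<^sub>v u i)" for i
    have fc: "f k = c k \<cdot>\<^sub>v u k" if "k \<le> d" for k
    proof -
      have "\<exists>c. f k = c \<cdot>\<^sub>v u k" using h that unfolding U_def by blast
      thus ?thesis unfolding c_def by (rule someI_ex)
    qed
    have "finsum_vec TYPE('a) ?n f {..d} = finsum_vec TYPE('a) ?n (\<lambda>i. c i \<cdot>\<^sub>v u i) {..d}"
      unfolding finsum_vec_def using fc by (intro comm_monoid.finprod_cong'[OF comm_monoid_vec]) (auto simp: monoid_vec_def uc)
    hence "lcomb d u c = 0\<^sub>v ?n" using h finsum_vec_lcomb[OF uc'] by simp
    hence "c i = 0" using basis_indep[OF b] i by blast
    thus "f i = 0\<^sub>v ?n" using fc[OF i] zero_smult_vec'[OF uc[of i]] by simp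
  qed
  have 1: "(\<lambda>x. (A - th i \<cdot>\<^sub>m 1\<^sub>m ?n) *\<^sub>v x) ` U i = U (Suc i)" if "i < d" for i
    unfolding U_def by (rule image_line[of _ ?n, OF _ uc uc, where \<beta>=1]) (use Ac uS in auto)
  have 2: "(\<lambda>x. (A - th d \<cdot>\<^sub>m 1\<^sub>m ?n) *\<^sub>v x) ` U d = {0\<^sub>v ?n}"
    unfolding U_def by (rule image_line0[OF _ uc]) (use Ac uS ud in auto)
  have 3: "(\<lambda>x. (As - ths i \<cdot>\<^sub>m 1\<^sub>m ?n) *\<^sub>v x) ` U i = U (i - 1)" if i3: "1 \<le> i \<and> i \<le> d" for i
  proof -
    obtain \<beta> where hb: "\<beta> \<noteq> 0" and eq: "(As - ths i \<cdot>\<^sub>m 1\<^sub>m ?n) *\<^sub>v u i = \<beta> \<cdot>\<^sub>v u (i - 1)"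
      using lowS[of i] i3 by auto
    show ?thesis unfolding U_def by (rule image_line[OF Sc1 uc uc eq hb])
  qed
  have 4: "(\<lambda>x. (As - ths 0 \<cdot>\<^sub>m 1\<^sub>m ?n) *\<^sub>v x) ` U 0 = {0\<^sub>v ?n}"
  proof -
    have "(As - ths 0 \<cdot>\<^sub>m 1\<^sub>m ?n) *\<^sub>v u 0 = 0\<^sub>v ?n"
      unfolding u0 minus_smult_one_vec[OF Sc v(1)] Sv using v(1) by (intro eq_vecI) auto
    thus ?thesis unfolding U_def by (rule image_line0[OF Sc1 uc])
  qed
  have h1: "\<forall>i<d. (\<lambda>x. (A - th i \<cdot>\<^sub>m 1\<^sub>m ?n) *\<^sub>v x) ` U i = U (Suc i)"
    by (intro allI impI) (rule 1)
  have h3: "\<forall>i. 1 \<le> i \<and> i \<le> d \<longrightarrow> (\<lambda>x. (As - ths i \<cdot>\<^sub>m 1\<^sub>m ?n) *\<^sub>v x) ` U i = U (i - 1)"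
    by (intro allI impI) (rule 3)
  have "split_decomposition d A th As ths U" unfolding split_decomposition_def
    by (intro conjI dec h1 2 h3 4)
  thus ?thesis by blast
qed


lemma line_image_inv:
  assumes B: "(B :: 'a :: field mat) \<in> carrier_mat n n" and x: "x \<in> carrier_vec n" and y: "y \<in> carrier_vec n"
    and ynz: "y \<noteq> 0\<^sub>v n"
    and img: "(\<lambda>z. B *\<^sub>v z) ` {c \<cdot>\<^sub>v x | c. True} = {c \<cdot>\<^sub>v y | c. True}"
  shows "\<exists>a. a \<noteq> 0 \<and> B *\<^sub>v x = a \<cdot>\<^sub>v y"
proof -
  have "x = 1 \<cdot>\<^sub>v x" by simp
  hence "x \<in> {c \<cdot>\<^sub>v x | c. True}" by blast
  hence "B *\<^sub>v x \<in> {c \<cdot>\<^sub>v y | c. True}" using img by blast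
  then obtain a where a: "B *\<^sub>v x = a \<cdot>\<^sub>v y" by blast
  have "y = 1 \<cdot>\<^sub>v y" by simp
  hence "y \<in> (\<lambda>z. B *\<^sub>v z) ` {c \<cdot>\<^sub>v x | c. True}" using img by blast
  then obtain c where c: "y = B *\<^sub>v (c \<cdot>\<^sub>v x)" by blast
  have "y = (c * a) \<cdot>\<^sub>v y" using c unfolding mult_mat_vec[OF B x] a by (simp add: smult_smult_assoc)
  hence "a \<noteq> 0" using ynz y zero_smult_vec'[OF y] by auto
  thus ?thesis using a by blast
qed

lemma line_image0_inv:
  assumes img: "(\<lambda>z. B *\<^sub>v z) ` {c \<cdot>\<^sub>v x | c. True} = {0\<^sub>v n}"
  shows "B *\<^sub>v (x :: 'a :: field vec) = 0\<^sub>v n"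
proof -
  have "x = 1 \<cdot>\<^sub>v x" by simp
  hence "x \<in> {c \<cdot>\<^sub>v x | c. True}" by blast
  thus ?thesis using img by blast
qed

lemma vec_rearr:
  assumes "(x :: 'a :: field vec) \<in> carrier_vec n" "y \<in> carrier_vec n" "z \<in> carrier_vec n"
    and "x - t \<cdot>\<^sub>v y = z"
  shows "x = t \<cdot>\<^sub>v y + z"
proof (rule eq_vecI)
  fix i assume "i < dim_vec (t \<cdot>\<^sub>v y + z)"
  hence i: "i < n" using assms by simp
  have "(x - t \<cdot>\<^sub>v y) $ i = z $ i" using assms(4) by simp
  hence "x $ i - t * y $ i = z $ i" using assms(1-3) i by simp
  thus "x $ i = (t \<cdot>\<^sub>v y + z) $ i" using assms i by (simp add: algebra_simps)
qed (use assms in simp)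

theorem theorem4p1:
  fixes d :: nat and A As :: "'a::field mat" and th ths :: "nat \<Rightarrow> 'a"
  assumes "eigenvalue_ordering d A th"
    and "eigenvalue_ordering d As ths"
  defines "E \<equiv> prim_idem d A th" and "Es \<equiv> prim_idem d As ths"
  shows "(\<exists>U. split_decomposition d A th As ths U) \<longleftrightarrow>
    ((\<forall>i\<le>d. \<forall>j\<le>d.
        (int i - int j > 1 \<longrightarrow> Es i * A * Es j = 0\<^sub>m (Suc d) (Suc d)) \<and>
        (int i - int j = 1 \<longrightarrow> Es i * A * Es j \<noteq> 0\<^sub>m (Suc d) (Suc d))) \<and>
     (\<forall>i\<le>d. \<forall>j\<le>d.
        (int j - int i > 1 \<longrightarrow> E i * As * E j = 0\<^sub>m (Suc d) (Suc d)) \<and>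
        (int j - int i = 1 \<longrightarrow> E i * As * E j \<noteq> 0\<^sub>m (Suc d) (Suc d))))"
proof -
  let ?n = "Suc d"
  have spA: "spectral d A th E" unfolding E_def by (rule spectral_prim_idem[OF assms(1)])
  have spS: "spectral d As ths Es" unfolding Es_def by (rule spectral_prim_idem[OF assms(2)])
  have Ac: "A \<in> carrier_mat ?n ?n" by (rule sp_M[OF spA])
  have Sc: "As \<in> carrier_mat ?n ?n" by (rule sp_M[OF spS])
  have Ac1: "A - t \<cdot>\<^sub>m 1\<^sub>m ?n \<in> carrier_mat ?n ?n" for t
    by (intro minus_carrier_mat smult_carrier_mat one_carrier_mat)
  have Sc1: "As - t \<cdot>\<^sub>m 1\<^sub>m ?n \<in> carrier_mat ?n ?n" for t
    by (intro minus_carrier_mat smult_carrier_mat one_carrier_mat)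
  show ?thesis
  proof
    assume "\<exists>U. split_decomposition d A th As ths U"
    then obtain U where sd: "split_decomposition d A th As ths U" by blast
    have dec: "decomposition d U" using sd unfolding split_decomposition_def by blast
    have sA: "\<And>i. i < d \<Longrightarrow> (\<lambda>x. (A - th i \<cdot>\<^sub>m 1\<^sub>m ?n) *\<^sub>v x) ` U i = U (Suc i)"
      using sd unfolding split_decomposition_def by blast
    have sAd: "(\<lambda>x. (A - th d \<cdot>\<^sub>m 1\<^sub>m ?n) *\<^sub>v x) ` U d = {0\<^sub>v ?n}"
      using sd unfolding split_decomposition_def by blast
    have sS: "\<And>i. 1 \<le> i \<Longrightarrow> i \<le> d \<Longrightarrow> (\<lambda>x. (As - ths i \<cdot>\<^sub>m 1\<^sub>m ?n) *\<^sub>v x) ` U i = U (i - 1)"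
      using sd unfolding split_decomposition_def by blast
    have sS0: "(\<lambda>x. (As - ths 0 \<cdot>\<^sub>m 1\<^sub>m ?n) *\<^sub>v x) ` U 0 = {0\<^sub>v ?n}"
      using sd unfolding split_decomposition_def by blast
    have od: "\<And>i. i \<le> d \<Longrightarrow> one_dim_subspace ?n (U i)" using dec unfolding decomposition_def by blast
    have dind: "\<And>f. (\<forall>i\<le>d. f i \<in> U i) \<Longrightarrow> finsum_vec TYPE('a) ?n f {..d} = 0\<^sub>v ?n \<Longrightarrow> \<forall>i\<le>d. f i = 0\<^sub>v ?n"
      using dec unfolding decomposition_def by blast
    define u where "u i = (SOME x. x \<in> carrier_vec ?n \<and> x \<noteq> 0\<^sub>v ?n \<and> U i = {c \<cdot>\<^sub>v x | c. True})" for i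
    have u: "u i \<in> carrier_vec ?n \<and> u i \<noteq> 0\<^sub>v ?n \<and> U i = {c \<cdot>\<^sub>v u i | c. True}" if "i \<le> d" for i
    proof -
      have "\<exists>x. x \<in> carrier_vec ?n \<and> x \<noteq> 0\<^sub>v ?n \<and> U i = {c \<cdot>\<^sub>v x | c. True}"
        using od[OF that] unfolding one_dim_subspace_def by blast
      thus ?thesis unfolding u_def by (rule someI_ex)
    qed
    have uc: "\<And>i. i \<le> d \<Longrightarrow> u i \<in> carrier_vec ?n" using u by blast
    have unz: "\<And>i. i \<le> d \<Longrightarrow> u i \<noteq> 0\<^sub>v ?n" using u by blast
    have uU: "\<And>i. i \<le> d \<Longrightarrow> U i = {c \<cdot>\<^sub>v u i | c. True}" using u by blast
    have b: "is_basis d u"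
    proof (rule indep_basis[OF uc])
      fix c assume h: "lcomb d u c = 0\<^sub>v ?n"
      have "\<forall>i\<le>d. c i \<cdot>\<^sub>v u i = 0\<^sub>v ?n"
      proof (rule dind)
        show "\<forall>i\<le>d. c i \<cdot>\<^sub>v u i \<in> U i" using uU by blast
        show "finsum_vec TYPE('a) ?n (\<lambda>i. c i \<cdot>\<^sub>v u i) {..d} = 0\<^sub>v ?n"
          using finsum_vec_lcomb[OF uc] h by simp
      qed
      thus "\<forall>k\<le>d. c k = 0" using smult_vec_zero_iff uc unz by blast
    qed
    have exA: "\<exists>a. a \<noteq> 0 \<and> (A - th i \<cdot>\<^sub>m 1\<^sub>m ?n) *\<^sub>v u i = a \<cdot>\<^sub>v u (Suc i)" if "i < d" for i
      by (rule line_image_inv[OF Ac1 uc uc unz]) (use sA[OF that] uU that in auto)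
    define \<alpha> where "\<alpha> i = (SOME a. a \<noteq> 0 \<and> (A - th i \<cdot>\<^sub>m 1\<^sub>m ?n) *\<^sub>v u i = a \<cdot>\<^sub>v u (Suc i))" for i
    have \<alpha>: "\<alpha> i \<noteq> 0 \<and> (A - th i \<cdot>\<^sub>m 1\<^sub>m ?n) *\<^sub>v u i = \<alpha> i \<cdot>\<^sub>v u (Suc i)" if "i < d" for i
      unfolding \<alpha>_def by (rule someI_ex[OF exA[OF that]])
    have exS: "\<exists>a. a \<noteq> 0 \<and> (As - ths i \<cdot>\<^sub>m 1\<^sub>m ?n) *\<^sub>v u i = a \<cdot>\<^sub>v u (i - 1)" if "1 \<le> i" "i \<le> d" for i
      by (rule line_image_inv[OF Sc1 uc uc unz]) (use sS[OF that] uU that in auto)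
    define \<beta> where "\<beta> i = (SOME a. a \<noteq> 0 \<and> (As - ths i \<cdot>\<^sub>m 1\<^sub>m ?n) *\<^sub>v u i = a \<cdot>\<^sub>v u (i - 1))" for i
    have \<beta>: "\<beta> i \<noteq> 0 \<and> (As - ths i \<cdot>\<^sub>m 1\<^sub>m ?n) *\<^sub>v u i = \<beta> i \<cdot>\<^sub>v u (i - 1)" if "1 \<le> i" "i \<le> d" for i
      unfolding \<beta>_def by (rule someI_ex[OF exS[OF that]])
    have Ad: "(A - th d \<cdot>\<^sub>m 1\<^sub>m ?n) *\<^sub>v u d = 0\<^sub>v ?n"
      by (rule line_image0_inv) (use sAd uU in auto)
    have S0: "(As - ths 0 \<cdot>\<^sub>m 1\<^sub>m ?n) *\<^sub>v u 0 = 0\<^sub>v ?n"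
      by (rule line_image0_inv) (use sS0 uU in auto)
    have upA: "A *\<^sub>v u k = th k \<cdot>\<^sub>v u k + \<alpha> k \<cdot>\<^sub>v u (Suc k)" if k: "k < d" for k
      by (rule vec_rearr[of _ ?n]) (use Ac uc k \<alpha>[OF k] minus_smult_one_vec[OF Ac uc[of k]] in auto)
    have upS: "As *\<^sub>v u (d - k) = ths (d - k) \<cdot>\<^sub>v u (d - k) + \<beta> (d - k) \<cdot>\<^sub>v u (d - Suc k)" if k: "k < d" for k
    proof -
      have k1: "1 \<le> d - k" "d - k \<le> d" "d - k - 1 = d - Suc k" using k by auto
      show ?thesis
        by (rule vec_rearr[of _ ?n]) (use Sc uc k1 \<beta>[OF k1(1,2)] minus_smult_one_vec[OF Sc uc[of "d - k"]] in auto)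
    qed
    note R1 = I2[OF spS Ac b, where \<beta>=\<beta> and \<alpha>=\<alpha> and \<phi>=th]
    have R1a: "Es i * A * Es j = 0\<^sub>m ?n ?n" if "i \<le> d" "j \<le> d" "Suc j < i" for i j
      by (rule R1(1)) (use \<beta> S0 upA \<alpha> that in auto)
    have R1b: "Es i * A * Es j \<noteq> 0\<^sub>m ?n ?n" if "i \<le> d" "Suc j = i" for i j
      by (rule R1(2)) (use \<beta> S0 upA \<alpha> that in auto)
    note R2 = I2[OF sp_rev[OF spA] Sc basis_rev[OF b], where \<beta>="\<lambda>k. \<alpha> (d - k)" and \<alpha>="\<lambda>k. \<beta> (d - k)"
        and \<phi>="\<lambda>k. ths (d - k)"]
    have lowR: "(A - th (d - k) \<cdot>\<^sub>m 1\<^sub>m ?n) *\<^sub>v u (d - k) = \<alpha> (d - k) \<cdot>\<^sub>v u (d - (k - 1))"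
      if "1 \<le> k" "k \<le> d" for k
    proof -
      have "d - k < d" "Suc (d - k) = d - (k - 1)" using that by auto
      thus ?thesis using \<alpha>[of "d - k"] by simp
    qed
    have lowRnz: "\<alpha> (d - k) \<noteq> 0" if "1 \<le> k" "k \<le> d" for k
      using \<alpha>[of "d - k"] that by simp
    have R2a: "E (d - i) * As * E (d - j) = 0\<^sub>m ?n ?n" if "i \<le> d" "j \<le> d" "Suc j < i" for i j
      by (rule R2(1)) (use lowR lowRnz Ad upS \<beta> that in auto)
    have R2b: "E (d - i) * As * E (d - j) \<noteq> 0\<^sub>m ?n ?n" if "i \<le> d" "Suc j = i" for i j
      by (rule R2(2)) (use lowR lowRnz Ad upS \<beta> that in auto)
    show "(\<forall>i\<le>d. \<forall>j\<le>d.
        (int i - int j > 1 \<longrightarrow> Es i * A * Es j = 0\<^sub>m (Suc d) (Suc d)) \<and>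
        (int i - int j = 1 \<longrightarrow> Es i * A * Es j \<noteq> 0\<^sub>m (Suc d) (Suc d))) \<and>
     (\<forall>i\<le>d. \<forall>j\<le>d.
        (int j - int i > 1 \<longrightarrow> E i * As * E j = 0\<^sub>m (Suc d) (Suc d)) \<and>
        (int j - int i = 1 \<longrightarrow> E i * As * E j \<noteq> 0\<^sub>m (Suc d) (Suc d)))"
    proof (intro conjI allI impI)
      fix i j assume i: "i \<le> d" and j: "j \<le> d"
      {
        assume "int i - int j > 1"
        hence "Suc j < i" by simp
        thus "Es i * A * Es j = 0\<^sub>m ?n ?n" using R1a i j by blast
      next
        assume "int i - int j = 1"
        hence "Suc j = i" by simp
        thus "Es i * A * Es j \<noteq> 0\<^sub>m ?n ?n" using R1b i by blast
      next
        assume "int j - int i > 1"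
        hence "Suc (d - j) < d - i" "d - i \<le> d" "d - j \<le> d" using i j by auto
        hence "E (d - (d - i)) * As * E (d - (d - j)) = 0\<^sub>m ?n ?n" using R2a by blast
        thus "E i * As * E j = 0\<^sub>m ?n ?n" using i j by simp
      next
        assume "int j - int i = 1"
        hence "Suc (d - j) = d - i" "d - i \<le> d" using i j by auto
        hence "E (d - (d - i)) * As * E (d - (d - j)) \<noteq> 0\<^sub>m ?n ?n" using R2b by blast
        thus "E i * As * E j \<noteq> 0\<^sub>m ?n ?n" using i j by simp
      }
    qed
  next
    assume h: "(\<forall>i\<le>d. \<forall>j\<le>d.
        (int i - int j > 1 \<longrightarrow> Es i * A * Es j = 0\<^sub>m (Suc d) (Suc d)) \<and>
        (int i - int j = 1 \<longrightarrow> Es i * A * Es j \<noteq> 0\<^sub>m (Suc d) (Suc d))) \<and>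
     (\<forall>i\<le>d. \<forall>j\<le>d.
        (int j - int i > 1 \<longrightarrow> E i * As * E j = 0\<^sub>m (Suc d) (Suc d)) \<and>
        (int j - int i = 1 \<longrightarrow> E i * As * E j \<noteq> 0\<^sub>m (Suc d) (Suc d)))"
    show "\<exists>U. split_decomposition d A th As ths U"
    proof (rule II[OF spA spS])
      fix i j assume "i \<le> d" "j \<le> d" "Suc j < i"
      thus "Es i * A * Es j = 0\<^sub>m ?n ?n" using h by auto
    next
      fix j assume "Suc j \<le> d"
      moreover have "int (Suc j) - int j = 1" by simp
      ultimately show "Es (Suc j) * A * Es j \<noteq> 0\<^sub>m ?n ?n" using h by auto
    next
      fix i j assume "i \<le> d" "j \<le> d" "Suc i < j"
      thus "E i * As * E j = 0\<^sub>m ?n ?n" using h by auto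
    next
      fix i assume "Suc i \<le> d"
      moreover have "int (Suc i) - int i = 1" by simp
      ultimately show "E i * As * E (Suc i) \<noteq> 0\<^sub>m ?n ?n" using h by auto
    qed
  qed
qed

end
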